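(* Let $k\in\{1,\dots,n-1\}$, $-\infty<a_i<b_i<\infty$ for $i=1,\dots,n-k$, and $D=\mathbb R^k\times\prod_{i=1}^{n-k}(a_i,b_i)\subseteq\mathbb R^n$. Let $X(D)$, $Y(D)$ be rearrangement-invariant spaces on $D$ such that $W_0^1X(D)$ is continuously embedded in $Y(D)$, and denote by $I$ this canonical embedding. If $Y(D)$ has absolutely continuous norm, then $e_m(I)=\|I\|$ for every $m\in\mathbb N$; that is, $I$ is maximally noncompact ($\beta(I)=\|I\|$).
   Context: Throughout, $n\ge2$. Rearrangement-invariant spaces: let $\mathfrak M^+(D)$ be the nonnegative measurable functions on $D$; a functional $\varrho\colon\mathfrak M^+(D)\to[0,\infty]$ is a rearrangement-invariant Banach function norm if for all $f,g,F_j\in\mathfrak M^+(D)$, $\alpha\ge0$, measurable $E\subseteq D$: (i) $\varrho(f)=0$ iff $f=0$ a.e., $\varrho(\alpha f)=\alpha\varrho(f)$, $\varrho(f+g)\le\varrho(f)+\varrho(g)$; (ii) $0\le g\le f$ a.e. implies $\varrho(g)\le\varrho(f)$; (iii) $0\le F_j\nearrow f$ a.e. implies $\varrho(F_j)\nearrow\varrho(f)$; (iv) $|E|<\infty$ implies $\varrho(\chi_E)<\infty$; (v) if $|E|<\infty$ there is $C_E$ with $\int_E f\le C_E\varrho(f)$; (vi) $\varrho(f)=\varrho(g)$ whenever $f,g$ are equimeasurable. Then $X(D)=\{f\text{ measurable}:\varrho(|f|)<\infty\}$, $\|f\|_{X(D)}=\varrho(|f|)$. $X(D)$ has absolutely continuous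 norm if for every $f\in X(D)$ and every sequence of measurable $E_k\subseteq D$ with $\chi_{E_k}\to0$ a.e., $\|f\chi_{E_k}\|_{X(D)}\to0$. The Sobolev-type space $W^1X(D)$ is the set of weakly differentiable $u\in X(D)$ with $|\nabla u|\in X(D)$, normed by $\|u\|_{W^1X(D)}=\|u\|_{X(D)}+\||\nabla u|_{\ell^1}\|_{X(D)}$, where $|\nabla u|_{\ell^1}=\sum_{i=1}^n|\partial u/\partial x_i|$; $W_0^1X(D)$ is the closure of $\mathcal C_0^\infty(D)$ in $W^1X(D)$. For a bounded linear $T\colon X\to Y$ between Banach spaces, the $m$-th entropy number is $e_m(T)=\inf\{\varepsilon>0: \exists y_1,\dots,y_{2^{m-1}}\in Y \text{ with } T(B_X)\subseteq\bigcup_{j}(y_j+\varepsilon B_Y)\}$, where $B_X,B_Y$ are closed unit balls; the measure of noncompactness is $\beta(T)=\lim_{m\to\infty}e_m(T)$, and $T$ is maximally noncompact if $\beta(T)=\|T\|$. *)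

theory Defs
  imports "HOL-Analysis.Analysis"
begin

definition slab_domain :: "'n::finite set \<Rightarrow> ('n \<Rightarrow> real) \<Rightarrow> ('n \<Rightarrow> real) \<Rightarrow> (real^'n) set" where
  "slab_domain K a b = {x. \<forall>i. i \<notin> K \<longrightarrow> a i < x $ i \<and> x $ i < b i}"

definition nonneg_meas :: "(real^'n::finite) set \<Rightarrow> (real^'n \<Rightarrow> real) \<Rightarrow> bool" where
  "nonneg_meas D f \<longleftrightarrow> f \<in> borel_measurable (lebesgue_on D) \<and> (\<forall>x\<in>D. 0 \<le> f x)"

definition equimeasurable :: "(real^'n::finite) set \<Rightarrow> (real^'n \<Rightarrow> real) \<Rightarrow> (real^'n \<Rightarrow> real) \<Rightarrow> bool" where
  "equimeasurable D f g \<longleftrightarrow>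
     (\<forall>t::real. t \<ge> 0 \<longrightarrow> emeasure lebesgue {x\<in>D. f x > t} = emeasure lebesgue {x\<in>D. g x > t})"

definition ri_bfn :: "(real^'n::finite) set \<Rightarrow> ((real^'n \<Rightarrow> real) \<Rightarrow> ennreal) \<Rightarrow> bool" where
  "ri_bfn D \<rho> \<longleftrightarrow>
     \<comment> \<open>(i)\<close>
     (\<forall>f. nonneg_meas D f \<longrightarrow> (\<rho> f = 0 \<longleftrightarrow> (AE x in lebesgue_on D. f x = 0))) \<and>
     (\<forall>f \<alpha>. nonneg_meas D f \<and> \<alpha> \<ge> 0 \<longrightarrow> \<rho> (\<lambda>x. \<alpha> * f x) = ennreal \<alpha> * \<rho> f) \<and>
     (\<forall>f g. nonneg_meas D f \<and> nonneg_meas D g \<longrightarrow> \<rho> (\<lambda>x. f x + g x) \<le> \<rho> f + \<rho> g) \<and>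
     \<comment> \<open>(ii)\<close>
     (\<forall>f g. nonneg_meas D f \<and> nonneg_meas D g \<and> (AE x in lebesgue_on D. g x \<le> f x)
        \<longrightarrow> \<rho> g \<le> \<rho> f) \<and>
     \<comment> \<open>(iii)\<close>
     (\<forall>F f. (\<forall>j. nonneg_meas D (F j)) \<and> nonneg_meas D f \<and>
        (AE x in lebesgue_on D. incseq (\<lambda>j. F j x) \<and> (\<lambda>j. F j x) \<longlonglongrightarrow> f x)
        \<longrightarrow> incseq (\<lambda>j. \<rho> (F j)) \<and> (\<lambda>j. \<rho> (F j)) \<longlonglongrightarrow> \<rho> f) \<and>
     \<comment> \<open>(iv)\<close>
     (\<forall>E. E \<in> sets lebesgue \<and> E \<subseteq> D \<and> emeasure lebesgue E < \<infinity> \<longrightarrow> \<rho> (indicator E) < \<infinity>) \<and>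
     \<comment> \<open>(v)\<close>
     (\<forall>E. E \<in> sets lebesgue \<and> E \<subseteq> D \<and> emeasure lebesgue E < \<infinity> \<longrightarrow>
        (\<exists>C::real. \<forall>f. nonneg_meas D f \<longrightarrow>
           (\<integral>\<^sup>+ x. ennreal (f x) * indicator E x \<partial>lebesgue) \<le> ennreal C * \<rho> f)) \<and>
     \<comment> \<open>(vi)\<close>
     (\<forall>f g. nonneg_meas D f \<and> nonneg_meas D g \<and> equimeasurable D f g \<longrightarrow> \<rho> f = \<rho> g)"

definition ri_space :: "(real^'n::finite) set \<Rightarrow> ((real^'n \<Rightarrow> real) \<Rightarrow> ennreal) \<Rightarrow> (real^'n \<Rightarrow> real) set" where
  "ri_space D \<rho> = {f. f \<in> borel_measurable (lebesgue_on D) \<and> \<rho> (\<lambda>x. \<bar>f x\<bar>) < \<infinity>}"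

definition ri_norm :: "((real^'n::finite \<Rightarrow> real) \<Rightarrow> ennreal) \<Rightarrow> (real^'n \<Rightarrow> real) \<Rightarrow> real" where
  "ri_norm \<rho> f = enn2real (\<rho> (\<lambda>x. \<bar>f x\<bar>))"

definition abs_cont_norm :: "(real^'n::finite) set \<Rightarrow> ((real^'n \<Rightarrow> real) \<Rightarrow> ennreal) \<Rightarrow> bool" where
  "abs_cont_norm D \<rho> \<longleftrightarrow>
     (\<forall>f \<in> ri_space D \<rho>. \<forall>E :: nat \<Rightarrow> (real^'n) set.
        (\<forall>k. E k \<in> sets lebesgue \<and> E k \<subseteq> D) \<and>
        (AE x in lebesgue_on D. (\<lambda>k. indicator (E k) x :: real) \<longlonglongrightarrow> 0)
        \<longrightarrow> (\<lambda>k. ri_norm \<rho> (\<lambda>x. f x * indicator (E k) x)) \<longlonglongrightarrow> 0)"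

definition partial_d :: "'n::finite \<Rightarrow> (real^'n \<Rightarrow> real) \<Rightarrow> real^'n \<Rightarrow> real" where
  "partial_d i f x = deriv (\<lambda>t. f (x + t *\<^sub>R axis i 1)) 0"

primrec pd :: "'n::finite list \<Rightarrow> (real^'n \<Rightarrow> real) \<Rightarrow> real^'n \<Rightarrow> real" where
  "pd [] f = f"
| "pd (i # is) f = partial_d i (pd is f)"

definition test_fun :: "(real^'n::finite) set \<Rightarrow> (real^'n \<Rightarrow> real) \<Rightarrow> bool" where
  "test_fun D \<phi> \<longleftrightarrow>
     (\<forall>is. continuous_on UNIV (pd is \<phi>) \<and>
        (\<forall>i x. (\<lambda>t. pd is \<phi> (x + t *\<^sub>R axis i 1)) differentiable (at 0))) \<and>
     compact (closure {x. \<phi> x \<noteq> 0}) \<and> closure {x. \<phi> x \<noteq> 0} \<subseteq> D"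

definition locally_integrable :: "(real^'n::finite) set \<Rightarrow> (real^'n \<Rightarrow> real) \<Rightarrow> bool" where
  "locally_integrable D u \<longleftrightarrow> (\<forall>C. compact C \<and> C \<subseteq> D \<longrightarrow> set_integrable lebesgue C u)"

definition weak_partial :: "(real^'n::finite) set \<Rightarrow> (real^'n \<Rightarrow> real) \<Rightarrow> 'n \<Rightarrow> (real^'n \<Rightarrow> real) \<Rightarrow> bool" where
  "weak_partial D u i g \<longleftrightarrow> locally_integrable D u \<and> locally_integrable D g \<and>
     (\<forall>\<phi>. test_fun D \<phi> \<longrightarrow>
        (\<integral>x. u x * partial_d i \<phi> x \<partial>lebesgue) = - (\<integral>x. g x * \<phi> x \<partial>lebesgue))"

definition sobolev :: "(real^'n::finite) set \<Rightarrow> ((real^'n \<Rightarrow> real) \<Rightarrow> ennreal) \<Rightarrow> (real^'n \<Rightarrow> real) set" where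
  "sobolev D \<rho> = {u \<in> ri_space D \<rho>. \<exists>G. (\<forall>i. weak_partial D u i (G i)) \<and>
       (\<lambda>x. \<Sum>i\<in>UNIV. \<bar>G i x\<bar>) \<in> ri_space D \<rho>}"

text \<open>Weak gradient (unique a.e. on D, so the choice is irrelevant for norms).\<close>
definition weak_grad :: "(real^'n::finite) set \<Rightarrow> (real^'n \<Rightarrow> real) \<Rightarrow> 'n \<Rightarrow> real^'n \<Rightarrow> real" where
  "weak_grad D u = (SOME G. \<forall>i. weak_partial D u i (G i))"

definition sob_norm :: "(real^'n::finite) set \<Rightarrow> ((real^'n \<Rightarrow> real) \<Rightarrow> ennreal) \<Rightarrow> (real^'n \<Rightarrow> real) \<Rightarrow> real" where
  "sob_norm D \<rho> u = ri_norm \<rho> u + ri_norm \<rho> (\<lambda>x. \<Sum>i\<in>UNIV. \<bar>weak_grad D u i x\<bar>)"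

definition sobolev0 :: "(real^'n::finite) set \<Rightarrow> ((real^'n \<Rightarrow> real) \<Rightarrow> ennreal) \<Rightarrow> (real^'n \<Rightarrow> real) set" where
  "sobolev0 D \<rho> = {u \<in> sobolev D \<rho>. \<exists>\<phi> :: nat \<Rightarrow> real^'n \<Rightarrow> real.
       (\<forall>j. test_fun D (\<phi> j) \<and> \<phi> j \<in> sobolev D \<rho>) \<and>
       (\<lambda>j. sob_norm D \<rho> (\<lambda>x. \<phi> j x - u x)) \<longlonglongrightarrow> 0}"

definition sobolev_embedded :: "(real^'n::finite) set \<Rightarrow> ((real^'n \<Rightarrow> real) \<Rightarrow> ennreal) \<Rightarrow> ((real^'n \<Rightarrow> real) \<Rightarrow> ennreal) \<Rightarrow> bool" where
  "sobolev_embedded D \<rho>X \<rho>Y \<longleftrightarrow> sobolev0 D \<rho>X \<subseteq> ri_space D \<rho>Y \<and>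
     (\<exists>C. \<forall>u \<in> sobolev0 D \<rho>X. ri_norm \<rho>Y u \<le> C * sob_norm D \<rho>X u)"

definition emb_norm :: "(real^'n::finite) set \<Rightarrow> ((real^'n \<Rightarrow> real) \<Rightarrow> ennreal) \<Rightarrow> ((real^'n \<Rightarrow> real) \<Rightarrow> ennreal) \<Rightarrow> real" where
  "emb_norm D \<rho>X \<rho>Y = Sup {ri_norm \<rho>Y u | u. u \<in> sobolev0 D \<rho>X \<and> sob_norm D \<rho>X u \<le> 1}"

definition entropy_number :: "(real^'n::finite) set \<Rightarrow> ((real^'n \<Rightarrow> real) \<Rightarrow> ennreal) \<Rightarrow> ((real^'n \<Rightarrow> real) \<Rightarrow> ennreal) \<Rightarrow> nat \<Rightarrow> real" where
  "entropy_number D \<rho>X \<rho>Y m = Inf {\<epsilon>. \<epsilon> > 0 \<and>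
     (\<exists>y :: nat \<Rightarrow> real^'n \<Rightarrow> real. (\<forall>j < 2^(m-1). y j \<in> ri_space D \<rho>Y) \<and>
        (\<forall>u \<in> sobolev0 D \<rho>X. sob_norm D \<rho>X u \<le> 1 \<longrightarrow>
           (\<exists>j < 2^(m-1). ri_norm \<rho>Y (\<lambda>x. u x - y j x) \<le> \<epsilon>)))}"

end

theory Submission
  imports Defs "HOL-Computational_Algebra.Polynomial"
begin


definition smooth_seq :: "(nat \<Rightarrow> real \<Rightarrow> real) \<Rightarrow> bool" where
  "smooth_seq H \<longleftrightarrow> (\<forall>n x. (H n has_real_derivative H (Suc n) x) (at x))"

lemma poly_exp_tendsto_0: "((\<lambda>y. poly q y * exp (- y)) \<longlongrightarrow> (0::real)) at_top"
proof -
  have "((\<lambda>y. \<Sum>i\<le>degree q. coeff q i * (y ^ i / exp y)) \<longlongrightarrow> (\<Sum>i\<le>degree q. coeff q i * 0)) at_top"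
    by (intro tendsto_intros tendsto_power_div_exp_0)
  moreover have "(\<lambda>y. \<Sum>i\<le>degree q. coeff q i * (y ^ i / exp y)) = (\<lambda>y. poly q y * exp (- y))"
    by (simp add: poly_altdef sum_distrib_right exp_minus divide_inverse mult.assoc)
  ultimately show ?thesis by simp
qed

fun EP :: "nat \<Rightarrow> real poly" where
  "EP 0 = 1"
| "EP (Suc n) = [:0,0,1:] * (EP n - pderiv (EP n))"

definition EH :: "nat \<Rightarrow> real \<Rightarrow> real" where
  "EH n x = (if x > 0 then poly (EP n) (1/x) * exp (- (1/x)) else 0)"

lemma EH_right_lim: "((\<lambda>h. EH n h / h) \<longlongrightarrow> 0) (at_right 0)"
proof -
  have "((\<lambda>y. poly ([:0,1:] * EP n) y * exp (- y)) \<longlongrightarrow> (0::real)) at_top"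
    by (rule poly_exp_tendsto_0)
  moreover have "eventually (\<lambda>y. poly ([:0,1:] * EP n) y * exp (- y) = EH n (inverse y) / inverse y) at_top"
    using eventually_gt_at_top[of "0::real"]
    by eventually_elim (simp add: EH_def divide_inverse)
  ultimately have "((\<lambda>y. EH n (inverse y) / inverse y) \<longlongrightarrow> (0::real)) at_top"
    by (rule Lim_transform_eventually)
  then show ?thesis
    by (subst filterlim_at_right_to_top) simp
qed

lemma F_deriv: "((\<lambda>y. poly p y * exp (-y)) has_real_derivative
   (poly (pderiv p) y * exp (-y) - poly p y * exp (-y))) (at y)"
proof -
  have "((\<lambda>y. poly p y * exp (-y)) has_real_derivative
    (poly (pderiv p) y * exp (-y) + poly p y * (exp (-y) * (- 1)))) (at y)"
    by (auto intro!: derivative_eq_intros poly_DERIV)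
  then show ?thesis by simp
qed

lemma EH_deriv: "(EH n has_real_derivative EH (Suc n) x) (at x)"
proof (cases "x > 0")
  case True
  have inv: "((\<lambda>x. 1/x) has_real_derivative (- ((1/x)^2))) (at x)"
    using True DERIV_inverse[of x] by (simp add: divide_inverse power2_eq_square power_inverse)
  have d: "((\<lambda>x. poly (EP n) (1/x) * exp (- (1/x))) has_real_derivative
     (poly (pderiv (EP n)) (1/x) * exp (-(1/x)) - poly (EP n) (1/x) * exp (-(1/x))) * (- ((1/x)^2))) (at x)"
    using DERIV_chain2[OF F_deriv inv] .
  have eq: "(poly (pderiv (EP n)) (1/x) * exp (-(1/x)) - poly (EP n) (1/x) * exp (-(1/x))) * (- ((1/x)^2))
     = EH (Suc n) x"
    using True by (simp add: EH_def algebra_simps power2_eq_square)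
  show ?thesis
    apply (rule has_field_derivative_transform_within_open[OF d[unfolded eq], of "{0<..}"])
    using True by (auto simp: EH_def)
next
  case False
  show ?thesis
  proof (cases "x < 0")
    case True
    have "((\<lambda>_. 0) has_real_derivative 0) (at x)" by simp
    then have "((\<lambda>_. 0) has_real_derivative EH (Suc n) x) (at x)" using True by (simp add: EH_def)
    then show ?thesis
      apply (rule has_field_derivative_transform_within_open[of _ _ _ "{..<0}"])
      using True by (auto simp: EH_def)
  next
    case False
    with \<open>\<not> x > 0\<close> have x: "x = 0" by simp
    have "((\<lambda>h. (EH n (0 + h) - EH n 0) / h) \<longlongrightarrow> 0) (at 0)"
    proof (rule filterlim_split_at)
      show "((\<lambda>h. (EH n (0 + h) - EH n 0) / h) \<longlongrightarrow> 0) (at_right 0)"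
        using EH_right_lim by (simp add: EH_def)
      have "eventually (\<lambda>h. 0 = (EH n (0 + h) - EH n 0) / h) (at_left (0::real))"
        by (auto simp: EH_def eventually_at_left_field intro!: exI[of _ "-1"])
      then show "((\<lambda>h. (EH n (0 + h) - EH n 0) / h) \<longlongrightarrow> 0) (at_left 0)"
        by (rule Lim_transform_eventually[OF tendsto_const])
    qed
    then show ?thesis unfolding x DERIV_def by (simp add: EH_def)
  qed
qed

lemma smooth_EH: "smooth_seq EH"
  by (simp add: smooth_seq_def EH_deriv)



lemma Suc_choose': "Suc n choose k = (n choose k) + (if k = 0 then 0 else (n choose (k-1)))"
  by (cases k) simp_all

definition leib :: "(nat \<Rightarrow> real \<Rightarrow> real) \<Rightarrow> (nat \<Rightarrow> real \<Rightarrow> real) \<Rightarrow> nat \<Rightarrow> real \<Rightarrow> real" where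
  "leib H G n x = (\<Sum>i=0..n. real (n choose i) * H i x * G (n - i) x)"

lemma leib_0[simp]: "leib H G 0 x = H 0 x * G 0 x"
  by (simp add: leib_def)

lemma smooth_leib:
  assumes H: "smooth_seq H" and G: "smooth_seq G"
  shows "smooth_seq (leib H G)"
  unfolding smooth_seq_def
proof (intro allI)
  fix n x
  have *: "\<And>n. (H n has_real_derivative H (Suc n) x) (at x)" "\<And>n. (G n has_real_derivative G (Suc n) x) (at x)"
    using H G by (auto simp: smooth_seq_def)
  have sumeq: "(\<Sum>i = 0..n.
               real (n choose i) * (H (Suc i) x * G (n-i) x + G (Suc (n-i)) x * H i x)) =
            G 0 x * H (Suc n) x + (\<Sum>i = 0..n. H i x * (real (Suc n choose i) * G (Suc n - i) x))"
    apply (simp add: Suc_choose' algebra_simps sum.distrib)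
    apply (subst (4) sum_Suc_reindex)
    apply (auto simp: algebra_simps Suc_diff_le intro: sum.cong)
    done
  have "(leib H G n has_real_derivative
     (\<Sum>i = 0..n. real (n choose i) * (H (Suc i) x * G (n-i) x + G (Suc (n-i)) x * H i x))) (at x)"
    unfolding leib_def[abs_def]
    apply (rule DERIV_sum)
    subgoal for i
      using DERIV_cmult[OF DERIV_mult[OF *(1)[of i] *(2)[of "n-i"]], of "real (n choose i)"]
      by (simp add: mult.assoc)
    done
  moreover have "(\<Sum>i = 0..n. real (n choose i) * (H (Suc i) x * G (n-i) x + G (Suc (n-i)) x * H i x))
     = leib H G (Suc n) x"
    unfolding sumeq leib_def
    by (simp add: sum.atLeast0_atMost_Suc algebra_simps) 
  ultimately show "(leib H G n has_real_derivative leib H G (Suc n) x) (at x)" by simp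
qed

lemma smooth_affine:
  assumes H: "smooth_seq H"
  shows "smooth_seq (\<lambda>n x. a ^ n * H n (a * x + b))"
  unfolding smooth_seq_def
proof (intro allI)
  fix n x
  have "((\<lambda>x. H n (a * x + b)) has_real_derivative H (Suc n) (a * x + b) * a) (at x)"
    apply (rule DERIV_chain2[of "H n"])
    using H apply (simp add: smooth_seq_def)
    by (auto intro!: derivative_eq_intros)
  from DERIV_cmult[OF this, of "a^n"]
  show "((\<lambda>x. a ^ n * H n (a * x + b)) has_real_derivative a ^ Suc n * H (Suc n) (a * x + b)) (at x)"
    by (simp add: algebra_simps)
qed

lemma smooth_cont: "smooth_seq H \<Longrightarrow> continuous_on UNIV (H n)"
  unfolding smooth_seq_def
  by (meson DERIV_isCont continuous_at_imp_continuous_on)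



definition prodfun :: "('n::finite \<Rightarrow> nat \<Rightarrow> real \<Rightarrow> real) \<Rightarrow> ('n \<Rightarrow> nat) \<Rightarrow> real^'n \<Rightarrow> real" where
  "prodfun H m x = (\<Prod>j\<in>UNIV. H j (m j) (x $ j))"

lemma axis_comp: "(x + t *\<^sub>R axis i 1) $ j = x $ j + (if j = i then t else 0)"
  by (simp add: axis_def)

lemma prodfun_split: "prodfun H m y = H i (m i) (y $ i) * (\<Prod>j\<in>UNIV-{i}. H j (m j) (y $ j))"
  unfolding prodfun_def by (subst prod.remove[of UNIV i]) auto

lemma prodfun_deriv:
  assumes sm: "\<forall>j. smooth_seq (H j)"
  shows "((\<lambda>t. prodfun H m (x + t *\<^sub>R axis i 1)) has_real_derivative prodfun H (m(i := Suc (m i))) x) (at 0)"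
proof -
  define c where "c = (\<Prod>j\<in>UNIV-{i}. H j (m j) (x $ j))"
  have eq: "prodfun H m (x + t *\<^sub>R axis i 1) = H i (m i) (x$i + t) * c" for t
    unfolding prodfun_split[of H m _ i] c_def
    by (auto simp: axis_def intro!: prod.cong)
  have d1: "(H i (m i) has_real_derivative H i (Suc (m i)) (x$i + 0)) (at (x$i + 0))"
    using sm by (simp add: smooth_seq_def)
  have d2: "((\<lambda>t. x$i + t) has_real_derivative 1) (at 0)"
    by (auto intro!: derivative_eq_intros)
  have "((\<lambda>t. H i (m i) (x$i + t) * c) has_real_derivative H i (Suc (m i)) (x$i + 0) * 1 * c) (at 0)"
    by (rule DERIV_cmult_right[OF DERIV_chain2[OF d1 d2]])
  moreover have "H i (Suc (m i)) (x$i + 0) * 1 * c = prodfun H (m(i := Suc (m i))) x"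
    unfolding prodfun_split[of H _ _ i] c_def
    by (auto intro!: prod.cong)
  ultimately show ?thesis unfolding eq by simp
qed

lemma pd_prodfun:
  assumes sm: "\<forall>j. smooth_seq (H j)"
  shows "pd is (prodfun H (\<lambda>_. 0)) = prodfun H (\<lambda>j. count_list is j)"
proof (induction "is")
  case Nil
  then show ?case by simp
next
  case (Cons i "is")
  have eqm: "(count_list is)(i := Suc (count_list is i)) = count_list (i # is)"
    by (auto simp: fun_eq_iff)
  have "pd (i # is) (prodfun H (\<lambda>_. 0)) = partial_d i (prodfun H (count_list is))"
    using Cons by simp
  also have "\<dots> = prodfun H (count_list (i # is))"
    apply (rule ext)
    unfolding partial_d_def
    apply (rule DERIV_imp_deriv)
    apply (subst eqm[symmetric])
    by (rule prodfun_deriv[OF sm])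
  finally show ?case .
qed

lemma continuous_prodfun:
  assumes sm: "\<forall>j. smooth_seq (H j)"
  shows "continuous_on UNIV (prodfun H m)"
  unfolding prodfun_def
  apply (intro continuous_on_prod)
  apply (rule continuous_on_compose2[OF smooth_cont[of "H _" "m _"]])
  using sm by (auto intro!: continuous_intros)

lemma test_fun_prodfun:
  fixes c d :: "real^'n::finite"
  assumes sm: "\<forall>j. smooth_seq (H j)"
    and supp: "\<And>j t. t < c$j \<or> t > d$j \<Longrightarrow> H j 0 t = 0"
    and sub: "cbox c d \<subseteq> D"
  shows "test_fun D (prodfun H (\<lambda>_. 0))"
proof -
  have S: "{x. prodfun H (\<lambda>_. 0) x \<noteq> 0} \<subseteq> cbox c d"
  proof
    fix x assume "x \<in> {x. prodfun H (\<lambda>_. 0) x \<noteq> 0}"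
    then have "\<forall>j. H j 0 (x$j) \<noteq> 0" by (auto simp: prodfun_def)
    then show "x \<in> cbox c d" using supp by (force simp: mem_box_cart not_less)
  qed
  have cl: "closure {x. prodfun H (\<lambda>_. 0) x \<noteq> 0} \<subseteq> cbox c d"
    using closure_minimal[OF S closed_cbox] .
  have cpt: "compact (closure {x. prodfun H (\<lambda>_. 0) x \<noteq> 0})"
    using S bounded_cbox bounded_subset compact_closure by blast
  show ?thesis
    unfolding test_fun_def pd_prodfun[OF sm]
    using cl cpt sub continuous_prodfun[OF sm]
      differentiableI[OF has_field_derivative_imp_has_derivative[OF prodfun_deriv[OF sm]]]
    by blast
qed



definition bumpH :: "nat \<Rightarrow> real^'n \<Rightarrow> real^'n \<Rightarrow> 'n::finite \<Rightarrow> nat \<Rightarrow> real \<Rightarrow> real" where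
  "bumpH k c d j = leib (\<lambda>n t. real (Suc k) ^ n * EH n (real (Suc k) * t + (- real (Suc k) * c$j)))
                        (\<lambda>n t. (- real (Suc k)) ^ n * EH n ((- real (Suc k)) * t + real (Suc k) * d$j))"

definition bump :: "nat \<Rightarrow> real^'n \<Rightarrow> real^'n \<Rightarrow> real^'n::finite \<Rightarrow> real" where
  "bump k c d = prodfun (bumpH k c d) (\<lambda>_. 0)"

lemma smooth_bumpH: "\<forall>j. smooth_seq (bumpH k c d j)"
  unfolding bumpH_def by (intro allI smooth_leib smooth_affine smooth_EH)

lemma EH0: "EH 0 s = (if s > 0 then exp (- (1/s)) else 0)"
  by (simp add: EH_def)

lemma bumpH0: "bumpH k c d j 0 t = EH 0 (real (Suc k) * (t - c$j)) * EH 0 (real (Suc k) * (d$j - t))"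
  by (simp add: bumpH_def algebra_simps)

lemma EH0_nonneg: "0 \<le> EH 0 s"
  by (simp add: EH0)

lemma EH0_le1: "EH 0 s \<le> 1"
  by (simp add: EH0)

lemma bumpH0_supp: "t < c$j \<or> t > d$j \<Longrightarrow> bumpH k c d j 0 t = 0"
  unfolding bumpH0 EH0 by (auto simp: zero_less_mult_iff)

lemma bump_test: "cbox c d \<subseteq> D \<Longrightarrow> test_fun D (bump k c d)"
  unfolding bump_def
  by (rule test_fun_prodfun[OF smooth_bumpH bumpH0_supp])

lemma bump_nonneg: "0 \<le> bump k c d x"
  unfolding bump_def prodfun_def bumpH0
  by (intro prod_nonneg mult_nonneg_nonneg EH0_nonneg ballI)

lemma bump_le1: "bump k c d x \<le> 1"
  unfolding bump_def prodfun_def bumpH0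
  by (intro prod_le_1 conjI mult_nonneg_nonneg EH0_nonneg mult_le_one EH0_le1)

lemma bump_zero: "x \<notin> cbox c d \<Longrightarrow> bump k c d x = 0"
proof -
  assume "x \<notin> cbox c d"
  then obtain j where "x$j < c$j \<or> x$j > d$j" by (auto simp: mem_box_cart not_le)
  then have "bumpH k c d j 0 (x$j) = 0" by (rule bumpH0_supp)
  then show ?thesis unfolding bump_def prodfun_def
    by (intro prod_zero) auto
qed

lemma EH0_lim: "s > 0 \<Longrightarrow> (\<lambda>k. EH 0 (real (Suc k) * s)) \<longlonglongrightarrow> 1"
proof -
  assume s: "s > 0"
  have "(\<lambda>k. exp (- (inverse (real (Suc k)) * (1/s)))) \<longlonglongrightarrow> exp (- (0 * (1/s)))"
    by (intro tendsto_intros LIMSEQ_inverse_real_of_nat)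
  moreover have "EH 0 (real (Suc k) * s) = exp (- (inverse (real (Suc k)) * (1/s)))" for k
    using s by (simp add: EH0 divide_inverse mult.commute)
  ultimately show ?thesis by simp
qed

lemma bump_lim: "(\<lambda>k. bump k c d x) \<longlonglongrightarrow> indicator (box c d) x"
proof (cases "x \<in> box c d")
  case True
  then have in_: "c$j < x$j \<and> x$j < d$j" for j by (auto simp: mem_box_cart)
  have "(\<lambda>k. \<Prod>j\<in>UNIV. EH 0 (real (Suc k) * (x$j - c$j)) * EH 0 (real (Suc k) * (d$j - x$j)))
      \<longlonglongrightarrow> (\<Prod>j\<in>(UNIV::'a set). 1 * 1)"
    apply (intro tendsto_prod tendsto_mult EH0_lim)
    using in_ by auto
  then show ?thesis using True by (simp add: bump_def prodfun_def bumpH0)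
next
  case False
  then obtain j where "x$j \<le> c$j \<or> x$j \<ge> d$j" by (auto simp: mem_box_cart not_less)
  then have "bumpH k c d j 0 (x$j) = 0" for k
    unfolding bumpH0 EH0 by (auto simp: zero_less_mult_iff)
  then have "bump k c d x = 0" for k unfolding bump_def prodfun_def
    by (intro prod_zero) auto
  then show ?thesis using False by simp
qed

lemma continuous_bump: "continuous_on UNIV (bump k c d)"
  unfolding bump_def by (rule continuous_prodfun[OF smooth_bumpH])

lemma bump_measurable: "bump k c d \<in> borel_measurable lebesgue"
  using continuous_imp_measurable_on_sets_lebesgue[OF continuous_bump[of k c d]]
  by (simp add: lebesgue_on_UNIV_eq)



lemma box_integral_zero:
  fixes g :: "real^'n::finite \<Rightarrow> real"
  assumes li: "locally_integrable D g"
    and orth: "\<And>\<phi>. test_fun D \<phi> \<Longrightarrow> (\<integral>x. g x * \<phi> x \<partial>lebesgue) = 0"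
    and sub: "cbox c d \<subseteq> D"
  shows "(\<integral>x. g x * indicator (box c d) x \<partial>lebesgue) = 0"
proof -
  have "set_integrable lebesgue (cbox c d) g"
    using li sub unfolding locally_integrable_def by (simp add: compact_cbox)
  hence int: "integrable lebesgue (\<lambda>x. indicator (cbox c d) x *\<^sub>R g x)"
    by (simp add: set_integrable_def)
  have gm: "(\<lambda>x. indicator (cbox c d) x *\<^sub>R g x) \<in> borel_measurable lebesgue"
    using int by (rule borel_measurable_integrable)
  have eqk: "(\<lambda>x. g x * bump k c d x) = (\<lambda>x. (indicator (cbox c d) x *\<^sub>R g x) * bump k c d x)" for k
    using bump_zero by (auto simp: fun_eq_iff indicator_def)
  have eql: "(\<lambda>x. g x * indicator (box c d) x) = (\<lambda>x. (indicator (cbox c d) x *\<^sub>R g x) * indicator (box c d) x)"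
    using box_subset_cbox[of c d] by (auto simp: fun_eq_iff indicator_def)
  have "(\<lambda>k. \<integral>x. g x * bump k c d x \<partial>lebesgue) \<longlonglongrightarrow> (\<integral>x. g x * indicator (box c d) x \<partial>lebesgue)"
  proof (rule integral_dominated_convergence[where w="\<lambda>x. norm (indicator (cbox c d) x *\<^sub>R g x)"])
    show "(\<lambda>x. g x * indicator (box c d) x) \<in> borel_measurable lebesgue"
      unfolding eql by (intro borel_measurable_times gm borel_measurable_indicator) simp
    show "(\<lambda>x. g x * bump k c d x) \<in> borel_measurable lebesgue" for k
      unfolding eqk by (intro borel_measurable_times gm bump_measurable)
    show "integrable lebesgue (\<lambda>x. norm (indicator (cbox c d) x *\<^sub>R g x))"
      using int by (rule integrable_norm)
    show "AE x in lebesgue. (\<lambda>k. g x * bump k c d x) \<longlonglongrightarrow> g x * indicator (box c d) x"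
      by (intro AE_I2 tendsto_mult tendsto_const bump_lim)
    show "AE x in lebesgue. norm (g x * bump k c d x) \<le> norm (indicator (cbox c d) x *\<^sub>R g x)" for k
    proof (intro AE_I2)
      fix x
      show "norm (g x * bump k c d x) \<le> norm (indicator (cbox c d) x *\<^sub>R g x)"
      proof (cases "x \<in> cbox c d")
        case True
        have "\<bar>g x\<bar> * \<bar>bump k c d x\<bar> \<le> \<bar>g x\<bar> * 1"
          using bump_nonneg[of k c d x] bump_le1[of k c d x]
          by (intro mult_left_mono) auto
        then show ?thesis using True by (simp add: abs_mult)
      next
        case False
        then show ?thesis by (simp add: bump_zero)
      qed
    qed
  qed
  moreover have "(\<integral>x. g x * bump k c d x \<partial>lebesgue) = 0" for k
    by (rule orth[OF bump_test[OF sub]])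
  ultimately show ?thesis
    using LIMSEQ_unique[OF _ tendsto_const[of 0]] by simp
qed

lemma box_Int_box_cart:
  fixes a b c d :: "real^'n::finite"
  shows "box a b \<inter> box c d = box (\<chi> i. max (a$i) (c$i)) (\<chi> i. min (b$i) (d$i))"
  by (auto simp: mem_box_cart)

lemma nn_integral_pos_neg_eq:
  fixes f :: "'a \<Rightarrow> real"
  assumes int: "integrable M f" and z: "integral\<^sup>L M f = 0"
  shows "(\<integral>\<^sup>+x. ennreal (f x) \<partial>M) = (\<integral>\<^sup>+x. ennreal (- f x) \<partial>M)"
proof -
  have i1: "integrable M (\<lambda>x. max 0 (f x))" and i2: "integrable M (\<lambda>x. max 0 (- f x))"
    using int by (auto intro!: integrable_max)
  have "f = (\<lambda>x. max 0 (f x) - max 0 (- f x))" by (auto simp: fun_eq_iff)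
  then have "integral\<^sup>L M f = integral\<^sup>L M (\<lambda>x. max 0 (f x)) - integral\<^sup>L M (\<lambda>x. max 0 (- f x))"
    using Bochner_Integration.integral_diff[OF i1 i2] by metis
  with z have e: "integral\<^sup>L M (\<lambda>x. max 0 (f x)) = integral\<^sup>L M (\<lambda>x. max 0 (- f x))" by simp
  have m: "ennreal (max 0 y) = ennreal y" for y :: real
    by (cases "y \<ge> 0") (auto simp: ennreal_neg max_def)
  have "(\<integral>\<^sup>+x. ennreal (f x) \<partial>M) = (\<integral>\<^sup>+x. ennreal (max 0 (f x)) \<partial>M)" by (simp add: m)
  also have "\<dots> = ennreal (integral\<^sup>L M (\<lambda>x. max 0 (f x)))"
    by (rule nn_integral_eq_integral[OF i1]) auto
  also have "\<dots> = ennreal (integral\<^sup>L M (\<lambda>x. max 0 (- f x)))" by (simp add: e)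
  also have "\<dots> = (\<integral>\<^sup>+x. ennreal (max 0 (- f x)) \<partial>M)"
    by (rule nn_integral_eq_integral[OF i2, symmetric]) auto
  also have "\<dots> = (\<integral>\<^sup>+x. ennreal (- f x) \<partial>M)" by (simp add: m)
  finally show ?thesis .
qed



lemma ae_zero_box:
  fixes g :: "real^'n::finite \<Rightarrow> real"
  assumes li: "locally_integrable D g"
    and orth: "\<And>\<phi>. test_fun D \<phi> \<Longrightarrow> (\<integral>x. g x * \<phi> x \<partial>lebesgue) = 0"
    and sub: "cbox c d \<subseteq> D"
  shows "AE x in lebesgue. x \<in> box c d \<longrightarrow> g x = 0"
proof -
  define h where "h x = indicator (box c d) x * g x" for x
  have "set_integrable lebesgue (cbox c d) g"
    using li sub unfolding locally_integrable_def by (simp add: compact_cbox)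
  hence int0: "integrable lebesgue (\<lambda>x. indicator (cbox c d) x *\<^sub>R g x)"
    by (simp add: set_integrable_def)
  have heq: "h = (\<lambda>x. indicator (box c d) x *\<^sub>R (indicator (cbox c d) x *\<^sub>R g x))"
    using box_subset_cbox[of c d] by (auto simp: fun_eq_iff h_def indicator_def)
  have hint: "integrable lebesgue h"
    unfolding heq by (rule integrable_mult_indicator[OF _ int0]) simp
  have boxint: "(\<integral>x. h x * indicator (box a b) x \<partial>lebesgue) = 0" for a b
  proof -
    let ?c = "\<chi> i. max (c$i) (a$i)" and ?d = "\<chi> i. min (d$i) (b$i)"
    have "cbox ?c ?d \<subseteq> cbox c d" by (auto simp: mem_box_cart)
    with sub have sub': "cbox ?c ?d \<subseteq> D" by blast
    have "(\<lambda>x. h x * indicator (box a b) x) = (\<lambda>x. g x * indicator (box ?c ?d) x)"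
      by (auto simp: h_def fun_eq_iff indicator_def mem_box_cart)
    then show ?thesis using box_integral_zero[OF li orth sub'] by simp
  qed
  have hm: "h \<in> borel_measurable (completion lborel)" using hint by (rule borel_measurable_integrable)
  obtain h' where h'm: "h' \<in> borel_measurable lborel" and h'ae: "AE x in lborel. h x = h' x"
    using completion_ex_borel_measurable_real[OF hm] by blast
  have h'ae_l: "AE x in lebesgue. h x = h' x" using h'ae by (simp add: AE_completion_iff)
  have h'mc: "h' \<in> borel_measurable lebesgue" using h'm by (rule measurable_completion)
  have "integrable lebesgue h'"
    using hint integrable_cong_AE[OF hm h'mc h'ae_l] by simp
  then have h'int: "integrable lborel h'"
    using integrable_completion[OF h'm] by simp
  have box': "(\<integral>x. h' x * indicator (box a b) x \<partial>lborel) = 0" for a b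
  proof -
    have "(\<integral>x. h' x * indicator (box a b) x \<partial>lborel) = (\<integral>x. h' x * indicator (box a b) x \<partial>lebesgue)"
      by (rule integral_completion[symmetric]) (use h'm in measurable)
    also have "\<dots> = (\<integral>x. h x * indicator (box a b) x \<partial>lebesgue)"
      apply (rule integral_cong_AE)
      apply (intro borel_measurable_times h'mc borel_measurable_indicator; simp)
      apply (intro borel_measurable_times hm borel_measurable_indicator; simp)
      using h'ae_l by (auto elim!: eventually_mono)
    finally show ?thesis using boxint by simp
  qed
  define M1 where "M1 = density lborel (\<lambda>x. ennreal (h' x))"
  define M2 where "M2 = density lborel (\<lambda>x. ennreal (- h' x))"
  let ?E = "range (\<lambda>(a, b). box a b :: (real^'n) set)"
  let ?A = "\<lambda>i::nat. box (\<chi> j. - real i) (\<chi> j. real i) :: (real^'n) set"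
  have M12: "M1 = M2"
  proof (rule measure_eqI_generator_eq[where \<Omega>=UNIV and E="?E" and A="?A"])
    show "Int_stable ?E"
      unfolding Int_stable_def by (auto simp: box_Int_box_cart)
    show "?E \<subseteq> Pow UNIV" by simp
    have sE: "sets lborel = sigma_sets UNIV ?E"
      unfolding sets_lborel by (subst borel_eq_box) (simp add: sets_measure_of)
    show "sets M1 = sigma_sets UNIV ?E" unfolding M1_def using sE by simp
    show "sets M2 = sigma_sets UNIV ?E" unfolding M2_def using sE by simp
    show "range ?A \<subseteq> ?E" by auto
    show "(\<Union>i. ?A i) = UNIV"
    proof (intro set_eqI iffI UNIV_I)
      fix x :: "real^'n"
      define i where "i = nat \<lceil>\<Sum>j\<in>UNIV. \<bar>x$j\<bar>\<rceil> + 1"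
      have "\<bar>x$j\<bar> < real i" for j
      proof -
        have "\<bar>x$j\<bar> \<le> (\<Sum>j\<in>UNIV. \<bar>x$j\<bar>)"
          by (rule member_le_sum) auto
        also have "\<dots> \<le> real (nat \<lceil>\<Sum>j\<in>UNIV. \<bar>x$j\<bar>\<rceil>)" by linarith
        finally show ?thesis unfolding i_def by simp
      qed
      then have "- real i < x$j \<and> x$j < real i" for j
        by (metis abs_less_iff minus_less_iff)
      then have "x \<in> ?A i" by (simp add: mem_box_cart)
      then show "x \<in> (\<Union>i. ?A i)" by blast
    qed
    show "emeasure M1 (?A i) \<noteq> \<infinity>" for i
    proof -
      have "emeasure M1 (?A i) = (\<integral>\<^sup>+x. ennreal (h' x) * indicator (?A i) x \<partial>lborel)"
        unfolding M1_def by (rule emeasure_density) (use h'm in auto)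
      also have "\<dots> \<le> (\<integral>\<^sup>+x. ennreal (norm (h' x)) \<partial>lborel)"
        by (intro nn_integral_mono) (auto simp: indicator_def ennreal_leI)
      also have "\<dots> < \<infinity>" using h'int by (simp add: integrable_iff_bounded)
      finally show ?thesis by simp
    qed
    show "emeasure M1 X = emeasure M2 X" if "X \<in> ?E" for X
    proof -
      obtain a b where X: "X = box a b" using \<open>X \<in> ?E\<close> by auto
      have int2: "integrable lborel (\<lambda>x. h' x * indicator X x)"
        using integrable_mult_indicator[OF _ h'int, of X] X by (simp add: mult.commute)
      have "emeasure M1 X = (\<integral>\<^sup>+x. ennreal (h' x) * indicator X x \<partial>lborel)"
        unfolding M1_def by (rule emeasure_density) (use h'm X in auto)
      also have "\<dots> = (\<integral>\<^sup>+x. ennreal (h' x * indicator X x) \<partial>lborel)"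
        by (intro nn_integral_cong) (auto simp: indicator_def)
      also have "\<dots> = (\<integral>\<^sup>+x. ennreal (- (h' x * indicator X x)) \<partial>lborel)"
        by (rule nn_integral_pos_neg_eq[OF int2]) (use box' X in simp)
      also have "\<dots> = (\<integral>\<^sup>+x. ennreal (- h' x) * indicator X x \<partial>lborel)"
        by (intro nn_integral_cong) (auto simp: indicator_def)
      also have "\<dots> = emeasure M2 X"
        unfolding M2_def by (rule emeasure_density[symmetric]) (use h'm X in auto)
      finally show ?thesis .
    qed
  qed
  have Pm: "{x. 0 < h' x} \<in> sets lborel" "{x. h' x < 0} \<in> sets lborel"
    using h'm by measurable
  have "(\<integral>\<^sup>+x. ennreal (h' x) \<partial>lborel) = (\<integral>\<^sup>+x. ennreal (h' x) * indicator {x. 0 < h' x} x \<partial>lborel)"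
    by (intro nn_integral_cong) (auto simp: indicator_def ennreal_neg)
  also have "\<dots> = emeasure M1 {x. 0 < h' x}"
    unfolding M1_def by (rule emeasure_density[symmetric]) (use h'm Pm in auto)
  also have "\<dots> = emeasure M2 {x. 0 < h' x}" by (simp add: M12)
  also have "\<dots> = (\<integral>\<^sup>+x. ennreal (- h' x) * indicator {x. 0 < h' x} x \<partial>lborel)"
    unfolding M2_def by (rule emeasure_density) (use h'm Pm in auto)
  also have "\<dots> = (\<integral>\<^sup>+x. (0::ennreal) \<partial>(lborel::(real^'n) measure))"
    by (intro nn_integral_cong) (auto simp: indicator_def ennreal_neg)
  finally have z1: "(\<integral>\<^sup>+x. ennreal (h' x) \<partial>lborel) = 0" by simp
  have "(\<integral>\<^sup>+x. ennreal (- h' x) \<partial>lborel) = (\<integral>\<^sup>+x. ennreal (- h' x) * indicator {x. h' x < 0} x \<partial>lborel)"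
    by (intro nn_integral_cong) (auto simp: indicator_def ennreal_neg)
  also have "\<dots> = emeasure M2 {x. h' x < 0}"
    unfolding M2_def by (rule emeasure_density[symmetric]) (use h'm Pm in auto)
  also have "\<dots> = emeasure M1 {x. h' x < 0}" by (simp add: M12)
  also have "\<dots> = (\<integral>\<^sup>+x. ennreal (h' x) * indicator {x. h' x < 0} x \<partial>lborel)"
    unfolding M1_def by (rule emeasure_density) (use h'm Pm in auto)
  also have "\<dots> = (\<integral>\<^sup>+x. (0::ennreal) \<partial>(lborel::(real^'n) measure))"
    by (intro nn_integral_cong) (auto simp: indicator_def ennreal_neg)
  finally have z2: "(\<integral>\<^sup>+x. ennreal (- h' x) \<partial>lborel) = 0" by simp
  have a1: "AE x in lborel. ennreal (h' x) = 0"
    using z1 nn_integral_0_iff_AE[of "\<lambda>x. ennreal (h' x)" lborel] h'm by simp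
  have a2: "AE x in lborel. ennreal (- h' x) = 0"
    using z2 nn_integral_0_iff_AE[of "\<lambda>x. ennreal (- h' x)" lborel] h'm by simp
  have "AE x in lborel. h' x = 0"
    using a1 a2 by eventually_elim (auto simp: ennreal_eq_0_iff)
  then have "AE x in lebesgue. h' x = 0" by (simp add: AE_completion_iff)
  then show ?thesis using h'ae_l
    by eventually_elim (auto simp: h_def)
qed

lemma fundamental:
  fixes g :: "real^'n::finite \<Rightarrow> real"
  assumes D: "open D" and li: "locally_integrable D g"
    and orth: "\<And>\<phi>. test_fun D \<phi> \<Longrightarrow> (\<integral>x. g x * \<phi> x \<partial>lebesgue) = 0"
  shows "AE x in lebesgue. x \<in> D \<longrightarrow> g x = 0"
proof -
  obtain \<D> where cnt: "countable \<D>" and sub: "\<D> \<subseteq> Pow D"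
    and box: "\<And>X. X \<in> \<D> \<Longrightarrow> \<exists>a b. X = cbox a b" and un: "\<Union>\<D> = D"
    using open_countable_Union_open_cbox[OF D] by metis
  have "AE x in lebesgue. x \<in> X \<longrightarrow> g x = 0" if XD: "X \<in> \<D>" for X
  proof -
    obtain a b where X: "X = cbox a b" using box XD by blast
    have "cbox a b \<subseteq> D" using sub XD X by auto
    then have ae1: "AE x in lebesgue. x \<in> box a b \<longrightarrow> g x = 0"
      using ae_zero_box[of D g a b] li orth by blast
    have "cbox a b - box a b \<in> null_sets lebesgue"
      using negligible_frontier_interval negligible_iff_null_sets by blast
    then have ae2: "AE x in lebesgue. x \<notin> cbox a b - box a b" by (rule AE_not_in)
    from ae1 ae2 show ?thesis unfolding X by eventually_elim auto
  qed
  then have "AE x in lebesgue. \<forall>X\<in>\<D>. x \<in> X \<longrightarrow> g x = 0"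
    by (rule AE_ball_countable'[OF _ cnt])
  then show ?thesis by eventually_elim (use un in blast)
qed



section \<open>Translations and Lebesgue measure\<close>

lemma lebesgue_translate:
  fixes t :: "'a::euclidean_space"
  shows "distr lebesgue lebesgue (\<lambda>x. t + x) = lebesgue"
    and "(\<lambda>x. t + x) \<in> lebesgue \<rightarrow>\<^sub>M lebesgue"
proof -
  have T: "(\<lambda>x. t + (\<Sum>j\<in>Basis. (1 * (x \<bullet> j)) *\<^sub>R j)) = (\<lambda>x. t + x)"
    by (simp add: euclidean_representation)
  show "(\<lambda>x. t + x) \<in> lebesgue \<rightarrow>\<^sub>M lebesgue"
    using lebesgue_affine_measurable[of "\<lambda>_. 1" t] T by simp
  show "distr lebesgue lebesgue (\<lambda>x. t + x) = lebesgue"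
    using lebesgue_affine_euclidean[of "\<lambda>_. 1" t] T by (simp add: density_1)
qed

lemma integrable_translate:
  fixes f :: "'a::euclidean_space \<Rightarrow> real"
  assumes "integrable lebesgue f"
  shows "integrable lebesgue (\<lambda>x. f (t + x))"
proof -
  have fm: "f \<in> borel_measurable lebesgue" using assms by (rule borel_measurable_integrable)
  show ?thesis
    using integrable_distr_eq[OF lebesgue_translate(2)[of t] fm] assms lebesgue_translate(1)[of t]
    by simp
qed

lemma integral_translate:
  fixes f :: "'a::euclidean_space \<Rightarrow> real"
  shows "(\<integral>x. f (t + x) \<partial>lebesgue) = (\<integral>x. f x \<partial>lebesgue)"
proof (cases "integrable lebesgue f")
  case True
  have fm: "f \<in> borel_measurable lebesgue" using True by (rule borel_measurable_integrable)
  show ?thesis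
    using integral_distr[OF lebesgue_translate(2)[of t] fm] lebesgue_translate(1)[of t] by simp
next
  case False
  have "\<not> integrable lebesgue (\<lambda>x. f (t + x))"
  proof
    assume "integrable lebesgue (\<lambda>x. f (t + x))"
    from integrable_translate[OF this, of "-t"] have "integrable lebesgue f" by simp
    with False show False by simp
  qed
  with False show ?thesis by (simp add: not_integrable_integral_eq)
qed

lemma measurable_translate:
  fixes f :: "'a::euclidean_space \<Rightarrow> real"
  assumes "f \<in> borel_measurable lebesgue"
  shows "(\<lambda>x. f (t + x)) \<in> borel_measurable lebesgue"
  using measurable_compose[OF lebesgue_translate(2)[of t] assms] by simp

lemma borel_imp_lebesgue: "A \<in> sets borel \<Longrightarrow> A \<in> sets lebesgue"
  by (metis sets_completionI_sets sets_lborel)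

lemma measurable_on_translate:
  fixes f :: "'a::euclidean_space \<Rightarrow> real"
  assumes inv: "\<And>x. x + c \<in> D \<longleftrightarrow> x \<in> D" and D: "D \<in> sets lebesgue"
    and f: "f \<in> borel_measurable (lebesgue_on D)"
  shows "(\<lambda>x. f (x - c)) \<in> borel_measurable (lebesgue_on D)"
proof -
  have "(\<lambda>x. if x \<in> D then f x else 0) \<in> borel_measurable lebesgue"
    using borel_measurable_if[OF D] f by blast
  from measurable_translate[OF this, of "-c"]
  have "(\<lambda>x. if x \<in> D then f (x - c) else 0) \<in> borel_measurable lebesgue"
  proof (rule back_subst[of "\<lambda>g. g \<in> borel_measurable lebesgue"])
    show "(\<lambda>x. if - c + x \<in> D then f (- c + x) else 0) = (\<lambda>x. if x \<in> D then f (x - c) else 0)"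
      using inv[of "x - c" for x] by (auto simp: fun_eq_iff)
  qed
  then show ?thesis using borel_measurable_if[OF D] by blast
qed

lemma emeasure_translate:
  fixes S :: "'a::euclidean_space set"
  shows "emeasure lebesgue ((\<lambda>x. x + c) ` S) = emeasure lebesgue S"
  using emeasure_lebesgue_affine[of 1 c S] by simp

lemma AE_measurable_lebesgue:
  fixes f g :: "'a::euclidean_space \<Rightarrow> real"
  assumes g: "g \<in> borel_measurable lebesgue" and ae: "AE x in lebesgue. f x = g x"
  shows "f \<in> borel_measurable lebesgue"
proof (rule borel_measurableI)
  fix S :: "real set" assume S: "open S"
  have A: "g -` S \<inter> space lebesgue \<in> sets lebesgue"
    using measurable_sets[OF g borel_open[OF S]] .
  have "AE x in lebesgue. x \<in> g -` S \<inter> space lebesgue \<longleftrightarrow> x \<in> f -` S \<inter> space lebesgue"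
    using ae by eventually_elim auto
  from completion.in_sets_AE[OF this A]
  show "f -` S \<inter> space lebesgue \<in> sets lebesgue" by simp
qed

lemma AE_measurable_lebesgue_on:
  fixes f g :: "'a::euclidean_space \<Rightarrow> real"
  assumes D: "D \<in> sets lebesgue" and g: "g \<in> borel_measurable (lebesgue_on D)"
    and ae: "AE x in lebesgue. x \<in> D \<longrightarrow> f x = g x"
  shows "f \<in> borel_measurable (lebesgue_on D)"
proof -
  have "(\<lambda>x. if x \<in> D then g x else 0) \<in> borel_measurable lebesgue"
    using borel_measurable_if[OF D] g by blast
  moreover have "AE x in lebesgue. (if x \<in> D then f x else 0) = (if x \<in> D then g x else 0)"
    using ae by eventually_elim auto
  ultimately have "(\<lambda>x. if x \<in> D then f x else 0) \<in> borel_measurable lebesgue"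
    by (rule AE_measurable_lebesgue)
  then show ?thesis using borel_measurable_if[OF D] by blast
qed



lemma test_cont: "test_fun D \<phi> \<Longrightarrow> continuous_on UNIV \<phi>"
proof -
  assume "test_fun D \<phi>"
  then have "continuous_on UNIV (pd [] \<phi>)" unfolding test_fun_def by blast
  then show ?thesis by simp
qed

lemma test_cont_partial: "test_fun D \<phi> \<Longrightarrow> continuous_on UNIV (partial_d i \<phi>)"
proof -
  assume "test_fun D \<phi>"
  then have "continuous_on UNIV (pd [i] \<phi>)" unfolding test_fun_def by blast
  then show ?thesis by simp
qed

lemma test_zero:
  fixes \<phi> :: "real^'n::finite \<Rightarrow> real"
  shows "x \<notin> closure {x. \<phi> x \<noteq> 0} \<Longrightarrow> \<phi> x = 0"
proof (rule ccontr)
  assume a: "x \<notin> closure {x. \<phi> x \<noteq> 0}" and "\<phi> x \<noteq> 0"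
  then have "x \<in> {x. \<phi> x \<noteq> 0}" by simp
  then have "x \<in> closure {x. \<phi> x \<noteq> 0}" using closure_subset by (rule subsetD[rotated])
  with a show False by simp
qed

lemma test_partial_zero:
  fixes \<phi> :: "real^'n::finite \<Rightarrow> real"
  assumes x: "x \<notin> closure {x. \<phi> x \<noteq> 0}"
  shows "partial_d i \<phi> x = 0"
proof -
  define U where "U = - closure {x. \<phi> x \<noteq> 0}"
  have oU: "open U" unfolding U_def by auto
  have o: "open ((\<lambda>t. x + t *\<^sub>R axis i 1) -` U)"
    by (rule continuous_open_vimage[OF oU]) (intro continuous_intros)
  have "((\<lambda>_. 0) has_real_derivative 0) (at 0)" by simp
  then have "((\<lambda>t. \<phi> (x + t *\<^sub>R axis i 1)) has_real_derivative 0) (at 0)"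
  proof (rule has_field_derivative_transform_within_open[OF _ o])
    show "0 \<in> (\<lambda>t. x + t *\<^sub>R axis i 1) -` U" using x by (simp add: U_def)
    fix t assume "t \<in> (\<lambda>t. x + t *\<^sub>R axis i 1) -` U"
    then have "x + t *\<^sub>R axis i 1 \<notin> closure {x. \<phi> x \<noteq> 0}" by (simp add: U_def)
    from test_zero[OF this] show "0 = \<phi> (x + t *\<^sub>R axis i 1)" by simp
  qed
  then show ?thesis unfolding partial_d_def by (rule DERIV_imp_deriv)
qed

lemma cont_supp_integrable:
  fixes \<psi> G :: "real^'n::finite \<Rightarrow> real"
  assumes cont: "continuous_on UNIV \<psi>" and S: "compact S" "S \<subseteq> D"
    and zero: "\<And>x. x \<notin> S \<Longrightarrow> \<psi> x = 0" and li: "locally_integrable D G"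
  shows "integrable lebesgue (\<lambda>x. G x * \<psi> x)"
proof -
  have "set_integrable lebesgue S G" using li S unfolding locally_integrable_def by blast
  then have int: "integrable lebesgue (\<lambda>x. indicator S x *\<^sub>R G x)" by (simp add: set_integrable_def)
  have "compact (\<psi> ` S)" by (rule compact_continuous_image[OF continuous_on_subset[OF cont] S(1)]) auto
  then obtain B where B: "\<And>x. x \<in> S \<Longrightarrow> \<bar>\<psi> x\<bar> \<le> B"
    using compact_imp_bounded bounded_real by (metis image_eqI)
  have eq: "(\<lambda>x. G x * \<psi> x) = (\<lambda>x. (indicator S x *\<^sub>R G x) * \<psi> x)"
    using zero by (auto simp: fun_eq_iff indicator_def)
  have pm: "\<psi> \<in> borel_measurable lebesgue"
    using continuous_imp_measurable_on_sets_lebesgue[OF cont] by (simp add: lebesgue_on_UNIV_eq)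
  have i1: "integrable lebesgue (\<lambda>x. \<bar>B\<bar> * (indicator S x *\<^sub>R G x))"
    using int by (rule integrable_mult_right)
  have m1: "(\<lambda>x. G x * \<psi> x) \<in> borel_measurable lebesgue"
    unfolding eq by (intro borel_measurable_times borel_measurable_integrable[OF int] pm)
  have a1: "AE x in lebesgue. norm (G x * \<psi> x) \<le> norm (\<bar>B\<bar> * (indicator S x *\<^sub>R G x))"
  proof (intro AE_I2)
    fix x show "norm (G x * \<psi> x) \<le> norm (\<bar>B\<bar> * (indicator S x *\<^sub>R G x))"
    proof (cases "x \<in> S")
      case True
      have "\<bar>G x\<bar> * \<bar>\<psi> x\<bar> \<le> \<bar>G x\<bar> * \<bar>B\<bar>"
        using B[OF True] by (intro mult_left_mono) auto
      then show ?thesis using True by (simp add: abs_mult mult.commute)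
    next
      case False then show ?thesis by (simp add: zero)
    qed
  qed
  show ?thesis by (rule Bochner_Integration.integrable_bound[OF i1 m1 a1])
qed

lemma test_integrable:
  assumes "test_fun D \<phi>" "locally_integrable D G"
  shows "integrable lebesgue (\<lambda>x. G x * \<phi> x)"
  using assms
  by (intro cont_supp_integrable[of \<phi> "closure {x. \<phi> x \<noteq> 0}" D])
     (auto simp: test_fun_def test_cont intro: test_zero)

lemma test_integrable_partial:
  assumes "test_fun D \<phi>" "locally_integrable D G"
  shows "integrable lebesgue (\<lambda>x. G x * partial_d i \<phi> x)"
  using assms
  by (intro cont_supp_integrable[of "partial_d i \<phi>" "closure {x. \<phi> x \<noteq> 0}" D])
     (auto simp: test_fun_def test_cont_partial intro: test_partial_zero)

lemma locally_integrable_diff: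
  "locally_integrable D u \<Longrightarrow> locally_integrable D v \<Longrightarrow> locally_integrable D (\<lambda>x. u x - v x)"
  unfolding locally_integrable_def by (auto intro: set_integral_diff)

lemma weak_partial_unique:
  assumes D: "open D" and w1: "weak_partial D u i G" and w2: "weak_partial D u i G'"
  shows "AE x in lebesgue. x \<in> D \<longrightarrow> G x = G' x"
proof -
  have liG: "locally_integrable D G" and liG': "locally_integrable D G'"
    using w1 w2 by (auto simp: weak_partial_def)
  have "AE x in lebesgue. x \<in> D \<longrightarrow> G x - G' x = 0"
  proof (rule fundamental[OF D locally_integrable_diff[OF liG liG']])
    fix \<phi> assume t: "test_fun D \<phi>"
    have e: "(\<integral>x. G x * \<phi> x \<partial>lebesgue) = (\<integral>x. G' x * \<phi> x \<partial>lebesgue)"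
      using w1 w2 t by (auto simp: weak_partial_def)
    have "(\<integral>x. (G x - G' x) * \<phi> x \<partial>lebesgue) = (\<integral>x. G x * \<phi> x - G' x * \<phi> x \<partial>lebesgue)"
      by (simp add: left_diff_distrib)
    also have "\<dots> = (\<integral>x. G x * \<phi> x \<partial>lebesgue) - (\<integral>x. G' x * \<phi> x \<partial>lebesgue)"
      by (rule Bochner_Integration.integral_diff[OF test_integrable[OF t liG] test_integrable[OF t liG']])
    finally show "(\<integral>x. (G x - G' x) * \<phi> x \<partial>lebesgue) = 0" using e by simp
  qed
  then show ?thesis by eventually_elim auto
qed

lemma weak_partial_diff:
  assumes w1: "weak_partial D u i G" and w2: "weak_partial D v i H"
  shows "weak_partial D (\<lambda>x. u x - v x) i (\<lambda>x. G x - H x)"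
proof -
  have li: "locally_integrable D u" "locally_integrable D v" "locally_integrable D G" "locally_integrable D H"
    using w1 w2 by (auto simp: weak_partial_def)
  show ?thesis unfolding weak_partial_def
  proof (intro conjI allI impI locally_integrable_diff li)
    fix \<phi> assume t: "test_fun D \<phi>"
    have "(\<integral>x. (u x - v x) * partial_d i \<phi> x \<partial>lebesgue)
        = (\<integral>x. u x * partial_d i \<phi> x - v x * partial_d i \<phi> x \<partial>lebesgue)"
      by (simp add: left_diff_distrib)
    also have "\<dots> = (\<integral>x. u x * partial_d i \<phi> x \<partial>lebesgue) - (\<integral>x. v x * partial_d i \<phi> x \<partial>lebesgue)"
      by (rule Bochner_Integration.integral_diff[OF test_integrable_partial[OF t li(1)] test_integrable_partial[OF t li(2)]])
    also have "\<dots> = - (\<integral>x. G x * \<phi> x \<partial>lebesgue) + (\<integral>x. H x * \<phi> x \<partial>lebesgue)"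
      using w1 w2 t by (simp add: weak_partial_def)
    also have "\<dots> = - ((\<integral>x. G x * \<phi> x \<partial>lebesgue) - (\<integral>x. H x * \<phi> x \<partial>lebesgue))" by simp
    also have "(\<integral>x. G x * \<phi> x \<partial>lebesgue) - (\<integral>x. H x * \<phi> x \<partial>lebesgue) = (\<integral>x. G x * \<phi> x - H x * \<phi> x \<partial>lebesgue)"
      by (rule Bochner_Integration.integral_diff[OF test_integrable[OF t li(3)] test_integrable[OF t li(4)], symmetric])
    also have "\<dots> = (\<integral>x. (G x - H x) * \<phi> x \<partial>lebesgue)" by (simp add: left_diff_distrib)
    finally show "(\<integral>x. (u x - v x) * partial_d i \<phi> x \<partial>lebesgue) = - (\<integral>x. (G x - H x) * \<phi> x \<partial>lebesgue)" .
  qed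
qed

section \<open>Translation of test functions and weak derivatives\<close>

lemma pd_translate: "pd is (\<lambda>x. \<phi> (x + c)) = (\<lambda>x. pd is \<phi> (x + c))"
proof (induction "is")
  case Nil then show ?case by simp
next
  case (Cons i "is")
  show ?case
  proof (rule ext)
    fix x
    have "(\<lambda>t. pd is \<phi> (x + t *\<^sub>R axis i 1 + c)) = (\<lambda>t. pd is \<phi> (x + c + t *\<^sub>R axis i 1))"
      by (simp add: algebra_simps)
    then show "pd (i # is) (\<lambda>x. \<phi> (x + c)) x = pd (i # is) \<phi> (x + c)"
      by (simp add: Cons partial_d_def)
  qed
qed

lemma test_translate:
  fixes c :: "real^'n::finite"
  assumes inv: "\<And>x. x + c \<in> D \<longleftrightarrow> x \<in> D" and t: "test_fun D \<phi>"
  shows "test_fun D (\<lambda>x. \<phi> (x + c))"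
proof -
  have cont: "continuous_on UNIV (pd is \<phi>)" for "is" using t by (simp add: test_fun_def)
  have dif: "(\<lambda>t. pd is \<phi> (y + t *\<^sub>R axis i 1)) differentiable (at 0)" for "is" i y
    using t by (simp add: test_fun_def)
  have S: "{x. \<phi> (x + c) \<noteq> 0} = (+) (-c) ` {x. \<phi> x \<noteq> 0}"
    by (auto simp: image_iff intro!: exI[of _ "_ + c"])
  have cl: "closure {x. \<phi> (x + c) \<noteq> 0} = (+) (-c) ` closure {x. \<phi> x \<noteq> 0}"
    unfolding S by (rule closure_translation)
  show ?thesis
    unfolding test_fun_def pd_translate
  proof (intro conjI allI)
    fix "is"
    show "continuous_on UNIV (\<lambda>x. pd is \<phi> (x + c))"
      by (rule continuous_on_compose2[OF cont[of "is"]]) (auto intro!: continuous_intros)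
    fix i x
    have "(\<lambda>t. pd is \<phi> (x + t *\<^sub>R axis i 1 + c)) = (\<lambda>t. pd is \<phi> (x + c + t *\<^sub>R axis i 1))"
      by (simp add: algebra_simps)
    then show "(\<lambda>t. pd is \<phi> (x + t *\<^sub>R axis i 1 + c)) differentiable (at 0)"
      using dif[of "is" "x + c" i] by simp
  next
    show "compact (closure {x. \<phi> (x + c) \<noteq> 0})"
      unfolding cl using t by (intro compact_translation) (simp add: test_fun_def)
    show "closure {x. \<phi> (x + c) \<noteq> 0} \<subseteq> D"
      unfolding cl using t inv[of "- c + _"] by (auto simp: test_fun_def)
  qed
qed

lemma loc_int_translate:
  fixes c :: "real^'n::finite"
  assumes inv: "\<And>x. x + c \<in> D \<longleftrightarrow> x \<in> D" and li: "locally_integrable D u"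
  shows "locally_integrable D (\<lambda>x. u (x - c))"
  unfolding locally_integrable_def
proof (intro allI impI)
  fix C assume C: "compact C \<and> C \<subseteq> D"
  define C' where "C' = (+) (-c) ` C"
  have "compact C'" unfolding C'_def using C by (intro compact_translation) auto
  moreover have "C' \<subseteq> D" unfolding C'_def using C inv[of "- c + _"] by auto
  ultimately have "set_integrable lebesgue C' u" using li by (simp add: locally_integrable_def)
  then have "integrable lebesgue (\<lambda>y. indicator C' y *\<^sub>R u y)" by (simp add: set_integrable_def)
  from integrable_translate[OF this, of "- c"]
  have "integrable lebesgue (\<lambda>x. indicator C' (- c + x) *\<^sub>R u (- c + x))" .
  moreover have "indicator C' (- c + x) = (indicator C x :: real)" for x
    unfolding C'_def by (auto simp: indicator_def image_iff)
  ultimately show "set_integrable lebesgue C (\<lambda>x. u (x - c))"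
    by (simp add: set_integrable_def)
qed

lemma weak_partial_translate:
  fixes c :: "real^'n::finite"
  assumes inv: "\<And>x. x + c \<in> D \<longleftrightarrow> x \<in> D" and wp: "weak_partial D u i g"
  shows "weak_partial D (\<lambda>x. u (x - c)) i (\<lambda>x. g (x - c))"
  unfolding weak_partial_def
proof (intro conjI allI impI)
  show "locally_integrable D (\<lambda>x. u (x - c))" "locally_integrable D (\<lambda>x. g (x - c))"
    using wp by (auto simp: weak_partial_def intro!: loc_int_translate[OF inv])
  fix \<phi> assume t: "test_fun D \<phi>"
  define \<psi> where "\<psi> = (\<lambda>y. \<phi> (y + c))"
  have t': "test_fun D \<psi>" unfolding \<psi>_def by (rule test_translate[OF inv t])
  have pp: "partial_d i \<psi> y = partial_d i \<phi> (y + c)" for y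
    using pd_translate[of "[i]" \<phi> c] unfolding \<psi>_def by (simp add: fun_eq_iff)
  have "(\<integral>x. u (x - c) * partial_d i \<phi> x \<partial>lebesgue) = (\<integral>y. u ((c + y) - c) * partial_d i \<phi> (c + y) \<partial>lebesgue)"
    by (rule integral_translate[symmetric, of "\<lambda>x. u (x - c) * partial_d i \<phi> x"])
  also have "\<dots> = (\<integral>y. u y * partial_d i \<psi> y \<partial>lebesgue)"
    by (simp add: pp add.commute)
  also have "\<dots> = - (\<integral>y. g y * \<psi> y \<partial>lebesgue)"
    using wp t' by (simp add: weak_partial_def)
  also have "(\<integral>y. g y * \<psi> y \<partial>lebesgue) = (\<integral>x. g (- c + x) * \<psi> (- c + x) \<partial>lebesgue)"
    by (rule integral_translate[symmetric])
  also have "\<dots> = (\<integral>x. g (x - c) * \<phi> x \<partial>lebesgue)"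
    by (simp add: \<psi>_def)
  finally show "(\<integral>x. u (x - c) * partial_d i \<phi> x \<partial>lebesgue) = - (\<integral>x. g (x - c) * \<phi> x \<partial>lebesgue)" .
qed



lemma loc_int_measurable:
  fixes f :: "real^'n::finite \<Rightarrow> real"
  assumes D: "open D" and li: "locally_integrable D f"
  shows "f \<in> borel_measurable (lebesgue_on D)"
proof (cases "D = {}")
  case True
  then show ?thesis using borel_measurable_if[of D f] by simp
next
  case False
  obtain \<D> where cnt: "countable \<D>" and sub: "\<D> \<subseteq> Pow D"
    and box: "\<And>X. X \<in> \<D> \<Longrightarrow> \<exists>a b. X = cbox a b" and un: "\<Union>\<D> = D"
    using open_countable_Union_open_cbox[OF D] by metis
  have ne: "\<D> \<noteq> {}" using un False by auto
  define X where "X = from_nat_into \<D>"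
  have XD: "X n \<in> \<D>" for n unfolding X_def using ne by (rule from_nat_into)
  have Xm: "X n \<in> sets lebesgue" for n using box[OF XD[of n]] by auto
  have Xi: "(\<lambda>x. indicator (X n) x *\<^sub>R f x) \<in> borel_measurable lebesgue" for n
  proof -
    obtain a b where "X n = cbox a b" using box[OF XD[of n]] by blast
    then have "compact (X n)" "X n \<subseteq> D" using sub XD[of n] by auto
    then have "set_integrable lebesgue (X n) f" using li by (simp add: locally_integrable_def)
    then show ?thesis by (simp add: set_integrable_def borel_measurable_integrable)
  qed
  define F where "F N x = (if x \<in> (\<Union>k<N. X k) then f x else 0)" for N x
  have Fm: "F N \<in> borel_measurable lebesgue" for N
  proof (induction N)
    case 0 then show ?case by (simp add: F_def)
  next
    case (Suc N)
    have "F (Suc N) = (\<lambda>x. if x \<in> X N then indicator (X N) x *\<^sub>R f x else F N x)"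
      by (auto simp: F_def fun_eq_iff lessThan_Suc)
    then show ?case using Suc Xi[of N] Xm[of N]
      by (simp add: measurable_If_set)
  qed
  have "(\<lambda>x. if x \<in> D then f x else 0) \<in> borel_measurable lebesgue"
  proof (rule borel_measurable_LIMSEQ_real[OF _ Fm])
    fix x
    show "(\<lambda>N. F N x) \<longlonglongrightarrow> (if x \<in> D then f x else 0)"
    proof (cases "x \<in> D")
      case True
      then obtain Y where "Y \<in> \<D>" "x \<in> Y" using un by blast
      then obtain n where "X n = Y" using from_nat_into_surj[OF cnt] X_def by metis
      with \<open>x \<in> Y\<close> have "eventually (\<lambda>N. F N x = f x) sequentially"
        by (auto simp: F_def eventually_sequentially intro!: exI[of _ "Suc n"])
      then show ?thesis using True by (simp add: tendsto_eventually)
    next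
      case False
      have "F N x = 0" for N using False sub XD by (auto simp: F_def)
      then show ?thesis using False by simp
    qed
  qed
  then show ?thesis using borel_measurable_if[of D f] D by auto
qed

section \<open>Elementary properties of r.i. norms\<close>

lemma nonneg_meas_abs: "f \<in> borel_measurable (lebesgue_on D) \<Longrightarrow> nonneg_meas D (\<lambda>x. \<bar>f x\<bar>)"
  by (simp add: nonneg_meas_def)

lemma bfn_zero: "ri_bfn D \<rho> \<Longrightarrow> nonneg_meas D f \<Longrightarrow> \<rho> f = 0 \<longleftrightarrow> (AE x in lebesgue_on D. f x = 0)"
proof -
  assume "ri_bfn D \<rho>" "nonneg_meas D f"
  moreover have "\<forall>f. nonneg_meas D f \<longrightarrow> (\<rho> f = 0 \<longleftrightarrow> (AE x in lebesgue_on D. f x = 0))"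
    using \<open>ri_bfn D \<rho>\<close> unfolding ri_bfn_def by (elim conjE) assumption
  ultimately show ?thesis by simp
qed

lemma bfn_add: "ri_bfn D \<rho> \<Longrightarrow> nonneg_meas D f \<Longrightarrow> nonneg_meas D g \<Longrightarrow> \<rho> (\<lambda>x. f x + g x) \<le> \<rho> f + \<rho> g"
proof -
  assume "ri_bfn D \<rho>" "nonneg_meas D f" "nonneg_meas D g"
  moreover have "\<forall>f g. nonneg_meas D f \<and> nonneg_meas D g \<longrightarrow> \<rho> (\<lambda>x. f x + g x) \<le> \<rho> f + \<rho> g"
    using \<open>ri_bfn D \<rho>\<close> unfolding ri_bfn_def by (elim conjE) assumption
  ultimately show ?thesis by simp
qed

lemma bfn_mono: "ri_bfn D \<rho> \<Longrightarrow> nonneg_meas D f \<Longrightarrow> nonneg_meas D g \<Longrightarrow> (AE x in lebesgue_on D. g x \<le> f x) \<Longrightarrow> \<rho> g \<le> \<rho> f"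
proof -
  assume "ri_bfn D \<rho>" "nonneg_meas D f" "nonneg_meas D g" "AE x in lebesgue_on D. g x \<le> f x"
  moreover have "\<forall>f g. nonneg_meas D f \<and> nonneg_meas D g \<and> (AE x in lebesgue_on D. g x \<le> f x)
        \<longrightarrow> \<rho> g \<le> \<rho> f"
    using \<open>ri_bfn D \<rho>\<close> unfolding ri_bfn_def by (elim conjE) assumption
  ultimately show ?thesis by simp
qed

lemma bfn_equi: "ri_bfn D \<rho> \<Longrightarrow> nonneg_meas D f \<Longrightarrow> nonneg_meas D g \<Longrightarrow> equimeasurable D f g \<Longrightarrow> \<rho> f = \<rho> g"
proof -
  assume "ri_bfn D \<rho>" "nonneg_meas D f" "nonneg_meas D g" "equimeasurable D f g"
  moreover have "\<forall>f g. nonneg_meas D f \<and> nonneg_meas D g \<and> equimeasurable D f g \<longrightarrow> \<rho> f = \<rho> g"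
    using \<open>ri_bfn D \<rho>\<close> unfolding ri_bfn_def by (elim conjE) assumption
  ultimately show ?thesis by simp
qed

context
  fixes D :: "(real^'n::finite) set" and \<rho> :: "(real^'n \<Rightarrow> real) \<Rightarrow> ennreal"
  assumes bfn: "ri_bfn D \<rho>" and Dm: "D \<in> sets lebesgue"
begin

lemma rho_mono:
  assumes "nonneg_meas D f" "nonneg_meas D g" "\<And>x. x \<in> D \<Longrightarrow> g x \<le> f x"
  shows "\<rho> g \<le> \<rho> f"
proof -
  have "AE x in lebesgue_on D. g x \<le> f x"
    using assms(3) by (intro AE_I2) (simp add: space_restrict_space)
  then show ?thesis using bfn_mono[OF bfn assms(1,2)] by simp
qed

lemma rho_ae:
  assumes "nonneg_meas D f" "nonneg_meas D g" "AE x in lebesgue. x \<in> D \<longrightarrow> f x = g x"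
  shows "\<rho> f = \<rho> g"
proof -
  have "AE x in lebesgue_on D. f x = g x"
    using assms(3) Dm by (subst AE_restrict_space_iff) auto
  then have "AE x in lebesgue_on D. g x \<le> f x" "AE x in lebesgue_on D. f x \<le> g x"
    by (auto elim: eventually_mono)
  then show ?thesis using bfn_mono[OF bfn assms(1,2)] bfn_mono[OF bfn assms(2,1)] by (metis order_antisym)
qed

lemma rho_add:
  assumes "nonneg_meas D f" "nonneg_meas D g"
  shows "\<rho> (\<lambda>x. f x + g x) \<le> \<rho> f + \<rho> g"
  using bfn_add[OF bfn assms] .

lemma rho_zero: "\<rho> (\<lambda>x. 0) = 0"
proof -
  have "nonneg_meas D (\<lambda>x. 0)" by (simp add: nonneg_meas_def)
  then show ?thesis using bfn_zero[OF bfn] by simp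
qed

lemma rho_translate:
  assumes inv: "\<And>x. x + c \<in> D \<longleftrightarrow> x \<in> D" and f: "nonneg_meas D f"
  shows "\<rho> (\<lambda>x. f (x - c)) = \<rho> f"
proof -
  have f2: "nonneg_meas D (\<lambda>x. f (x - c))"
    using f measurable_on_translate[OF inv Dm] inv[of "x - c" for x] by (auto simp: nonneg_meas_def)
  have "equimeasurable D (\<lambda>x. f (x - c)) f"
    unfolding equimeasurable_def
  proof (intro allI impI)
    fix t :: real
    have "{x\<in>D. f (x - c) > t} = (\<lambda>x. x + c) ` {x\<in>D. f x > t}"
    proof (intro set_eqI iffI)
      fix x assume x: "x \<in> {x\<in>D. f (x - c) > t}"
      have "x - c \<in> D" using x inv[of "x - c"] by simp
      with x have "x - c \<in> {x\<in>D. f x > t}" by simp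
      moreover have "x = (x - c) + c" by simp
      ultimately show "x \<in> (\<lambda>x. x + c) ` {x\<in>D. f x > t}" by (rule rev_image_eqI)
    next
      fix x assume "x \<in> (\<lambda>x. x + c) ` {x\<in>D. f x > t}"
      then obtain y where "y \<in> D" "f y > t" "x = y + c" by auto
      then show "x \<in> {x\<in>D. f (x - c) > t}" using inv[of y] by simp
    qed
    then show "emeasure lebesgue {x\<in>D. f (x - c) > t} = emeasure lebesgue {x\<in>D. f x > t}"
      by (simp add: emeasure_translate)
  qed
  then show ?thesis using bfn_equi[OF bfn f2 f] by simp
qed

lemma ri_space_translate:
  assumes inv: "\<And>x. x + c \<in> D \<longleftrightarrow> x \<in> D" and f: "f \<in> ri_space D \<rho>"
  shows "(\<lambda>x. f (x - c)) \<in> ri_space D \<rho>" "ri_norm \<rho> (\<lambda>x. f (x - c)) = ri_norm \<rho> f"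
proof -
  have fm: "f \<in> borel_measurable (lebesgue_on D)" using f by (simp add: ri_space_def)
  have e: "\<rho> (\<lambda>x. \<bar>f (x - c)\<bar>) = \<rho> (\<lambda>x. \<bar>f x\<bar>)"
    using rho_translate[OF inv nonneg_meas_abs[OF fm]] by simp
  show "(\<lambda>x. f (x - c)) \<in> ri_space D \<rho>"
    using f e measurable_on_translate[OF inv Dm fm] by (simp add: ri_space_def)
  show "ri_norm \<rho> (\<lambda>x. f (x - c)) = ri_norm \<rho> f"
    using e by (simp add: ri_norm_def)
qed

lemma ri_space_diff:
  assumes f: "f \<in> ri_space D \<rho>" and g: "g \<in> ri_space D \<rho>"
  shows "(\<lambda>x. f x - g x) \<in> ri_space D \<rho>"
proof -
  have fm: "f \<in> borel_measurable (lebesgue_on D)" and gm: "g \<in> borel_measurable (lebesgue_on D)"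
    using f g by (auto simp: ri_space_def)
  have "\<rho> (\<lambda>x. \<bar>f x - g x\<bar>) \<le> \<rho> (\<lambda>x. \<bar>f x\<bar> + \<bar>g x\<bar>)"
    by (rule rho_mono) (auto simp: nonneg_meas_def fm gm intro!: borel_measurable_abs borel_measurable_diff borel_measurable_add)
  also have "\<dots> \<le> \<rho> (\<lambda>x. \<bar>f x\<bar>) + \<rho> (\<lambda>x. \<bar>g x\<bar>)"
    by (rule rho_add) (auto simp: nonneg_meas_def fm gm intro!: borel_measurable_abs)
  also have "\<dots> < \<infinity>" using f g by (simp add: ri_space_def)
  finally show ?thesis using fm gm by (simp add: ri_space_def)
qed

lemma ri_space_zero: "(\<lambda>x. 0) \<in> ri_space D \<rho>"
  using rho_zero by (simp add: ri_space_def)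

end



lemma open_lebesgue: "open (D :: (real^'n::finite) set) \<Longrightarrow> D \<in> sets lebesgue"
  by (intro borel_imp_lebesgue borel_open)

lemma sum_abs_measurable:
  fixes G :: "'n::finite \<Rightarrow> real^'m::finite \<Rightarrow> real"
  assumes "\<And>i. G i \<in> borel_measurable (lebesgue_on D)"
  shows "(\<lambda>x. \<Sum>i\<in>UNIV. \<bar>G i x\<bar>) \<in> borel_measurable (lebesgue_on D)"
  using assms by (intro borel_measurable_sum borel_measurable_abs) auto

lemma sob_norm_eq:
  fixes u :: "real^'n::finite \<Rightarrow> real"
  assumes D: "open D" and bfn: "ri_bfn D \<rho>" and G: "\<forall>i. weak_partial D u i (G i)"
  shows "sob_norm D \<rho> u = ri_norm \<rho> u + ri_norm \<rho> (\<lambda>x. \<Sum>i\<in>UNIV. \<bar>G i x\<bar>)"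
proof -
  define W where "W = weak_grad D u"
  have ex: "\<exists>G. \<forall>i. weak_partial D u i (G i)" using G by blast
  have W: "\<forall>i. weak_partial D u i (W i)"
    unfolding W_def weak_grad_def by (rule someI_ex[OF ex])
  have "AE x in lebesgue. \<forall>i\<in>UNIV. x \<in> D \<longrightarrow> W i x = G i x"
  proof (rule AE_ball_countable')
    fix i show "AE x in lebesgue. x \<in> D \<longrightarrow> W i x = G i x"
      using weak_partial_unique[OF D W[rule_format, of i] G[rule_format, of i]] .
  qed simp
  then have ae: "AE x in lebesgue. x \<in> D \<longrightarrow> \<bar>\<Sum>i\<in>UNIV. \<bar>W i x\<bar>\<bar> = \<bar>\<Sum>i\<in>UNIV. \<bar>G i x\<bar>\<bar>"
    by eventually_elim auto
  have Wm: "W i \<in> borel_measurable (lebesgue_on D)" for i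
    using W loc_int_measurable[OF D] by (auto simp: weak_partial_def)
  have Gm: "G i \<in> borel_measurable (lebesgue_on D)" for i
    using G loc_int_measurable[OF D] by (auto simp: weak_partial_def)
  have "\<rho> (\<lambda>x. \<bar>\<Sum>i\<in>UNIV. \<bar>W i x\<bar>\<bar>) = \<rho> (\<lambda>x. \<bar>\<Sum>i\<in>UNIV. \<bar>G i x\<bar>\<bar>)"
    by (rule rho_ae[OF bfn open_lebesgue[OF D] nonneg_meas_abs nonneg_meas_abs ae])
       (auto intro!: sum_abs_measurable Wm Gm)
  then show ?thesis
    unfolding sob_norm_def ri_norm_def W_def by simp
qed

context
  fixes D :: "(real^'n::finite) set" and \<rho> :: "(real^'n \<Rightarrow> real) \<Rightarrow> ennreal"
  assumes D: "open D" and bfn: "ri_bfn D \<rho>"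
begin

lemma Dm: "D \<in> sets lebesgue" using D by (rule open_lebesgue)

lemma sobolev_translate:
  assumes inv: "\<And>x. x + c \<in> D \<longleftrightarrow> x \<in> D" and u: "u \<in> sobolev D \<rho>"
  shows "(\<lambda>x. u (x - c)) \<in> sobolev D \<rho>" "sob_norm D \<rho> (\<lambda>x. u (x - c)) = sob_norm D \<rho> u"
proof -
  obtain G where G: "\<forall>i. weak_partial D u i (G i)" and Gs: "(\<lambda>x. \<Sum>i\<in>UNIV. \<bar>G i x\<bar>) \<in> ri_space D \<rho>"
    and us: "u \<in> ri_space D \<rho>"
    using u by (auto simp: sobolev_def)
  have G': "\<forall>i. weak_partial D (\<lambda>x. u (x - c)) i (\<lambda>x. G i (x - c))"
    using G weak_partial_translate[OF inv] by blast
  have Gs': "(\<lambda>x. \<Sum>i\<in>UNIV. \<bar>G i (x - c)\<bar>) \<in> ri_space D \<rho>"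
    using ri_space_translate(1)[OF bfn Dm inv Gs] by simp
  have Gn: "ri_norm \<rho> (\<lambda>x. \<Sum>i\<in>UNIV. \<bar>G i (x - c)\<bar>) = ri_norm \<rho> (\<lambda>x. \<Sum>i\<in>UNIV. \<bar>G i x\<bar>)"
    using ri_space_translate(2)[OF bfn Dm inv Gs] by simp
  show "(\<lambda>x. u (x - c)) \<in> sobolev D \<rho>"
    unfolding sobolev_def using ri_space_translate(1)[OF bfn Dm inv us] G' Gs'
    by (intro CollectI conjI exI[of _ "\<lambda>i x. G i (x - c)"]) simp_all
  show "sob_norm D \<rho> (\<lambda>x. u (x - c)) = sob_norm D \<rho> u"
    using sob_norm_eq[OF D bfn G'] sob_norm_eq[OF D bfn G] ri_space_translate(2)[OF bfn Dm inv us] Gn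
    by simp
qed

lemma sobolev_diff:
  assumes u: "u \<in> sobolev D \<rho>" and v: "v \<in> sobolev D \<rho>"
  shows "(\<lambda>x. u x - v x) \<in> sobolev D \<rho>"
proof -
  obtain G where G: "\<forall>i. weak_partial D u i (G i)" and Gs: "(\<lambda>x. \<Sum>i\<in>UNIV. \<bar>G i x\<bar>) \<in> ri_space D \<rho>"
    and us: "u \<in> ri_space D \<rho>"
    using u by (auto simp: sobolev_def)
  obtain H where H: "\<forall>i. weak_partial D v i (H i)" and Hs: "(\<lambda>x. \<Sum>i\<in>UNIV. \<bar>H i x\<bar>) \<in> ri_space D \<rho>"
    and vs: "v \<in> ri_space D \<rho>"
    using v by (auto simp: sobolev_def)
  have GH: "\<forall>i. weak_partial D (\<lambda>x. u x - v x) i (\<lambda>x. G i x - H i x)"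
    using G H weak_partial_diff by blast
  have Gm: "G i \<in> borel_measurable (lebesgue_on D)" for i
    using G loc_int_measurable[OF D] by (auto simp: weak_partial_def)
  have Hm: "H i \<in> borel_measurable (lebesgue_on D)" for i
    using H loc_int_measurable[OF D] by (auto simp: weak_partial_def)
  have m: "(\<lambda>x. \<Sum>i\<in>UNIV. \<bar>G i x - H i x\<bar>) \<in> borel_measurable (lebesgue_on D)"
    by (intro borel_measurable_sum borel_measurable_abs borel_measurable_diff Gm Hm)
  have mG: "(\<lambda>x. \<Sum>i\<in>UNIV. \<bar>G i x\<bar>) \<in> borel_measurable (lebesgue_on D)"
    by (intro sum_abs_measurable Gm)
  have mH: "(\<lambda>x. \<Sum>i\<in>UNIV. \<bar>H i x\<bar>) \<in> borel_measurable (lebesgue_on D)"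
    by (intro sum_abs_measurable Hm)
  have "\<rho> (\<lambda>x. \<bar>\<Sum>i\<in>UNIV. \<bar>G i x - H i x\<bar>\<bar>) \<le> \<rho> (\<lambda>x. \<bar>\<Sum>i\<in>UNIV. \<bar>G i x\<bar>\<bar> + \<bar>\<Sum>i\<in>UNIV. \<bar>H i x\<bar>\<bar>)"
  proof (rule rho_mono[OF bfn Dm])
    show "nonneg_meas D (\<lambda>x. \<bar>\<Sum>i\<in>UNIV. \<bar>G i x\<bar>\<bar> + \<bar>\<Sum>i\<in>UNIV. \<bar>H i x\<bar>\<bar>)"
      unfolding nonneg_meas_def using mG mH by (auto intro!: borel_measurable_add borel_measurable_abs)
    show "nonneg_meas D (\<lambda>x. \<bar>\<Sum>i\<in>UNIV. \<bar>G i x - H i x\<bar>\<bar>)"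
      unfolding nonneg_meas_def using m by (auto intro!: borel_measurable_abs)
    fix x
    have "(\<Sum>i\<in>UNIV. \<bar>G i x - H i x\<bar>) \<le> (\<Sum>i\<in>UNIV. \<bar>G i x\<bar> + \<bar>H i x\<bar>)"
      by (intro sum_mono abs_triangle_ineq4)
    also have "\<dots> = (\<Sum>i\<in>UNIV. \<bar>G i x\<bar>) + (\<Sum>i\<in>UNIV. \<bar>H i x\<bar>)" by (rule sum.distrib)
    finally show "\<bar>\<Sum>i\<in>UNIV. \<bar>G i x - H i x\<bar>\<bar> \<le> \<bar>\<Sum>i\<in>UNIV. \<bar>G i x\<bar>\<bar> + \<bar>\<Sum>i\<in>UNIV. \<bar>H i x\<bar>\<bar>"
      by (simp add: sum_nonneg)
  qed
  also have "\<dots> \<le> \<rho> (\<lambda>x. \<bar>\<Sum>i\<in>UNIV. \<bar>G i x\<bar>\<bar>) + \<rho> (\<lambda>x. \<bar>\<Sum>i\<in>UNIV. \<bar>H i x\<bar>\<bar>)"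
    by (rule rho_add[OF bfn Dm]) (auto simp: nonneg_meas_def intro!: borel_measurable_abs mG mH)
  also have "\<dots> < \<infinity>" using Gs Hs by (simp add: ri_space_def)
  finally have "(\<lambda>x. \<Sum>i\<in>UNIV. \<bar>G i x - H i x\<bar>) \<in> ri_space D \<rho>"
    using m by (simp add: ri_space_def)
  then show ?thesis
    unfolding sobolev_def using ri_space_diff[OF bfn Dm us vs] GH
    by (intro CollectI conjI exI[of _ "\<lambda>i x. G i x - H i x"]) simp_all
qed

lemma sobolev0_translate:
  assumes inv: "\<And>x. x + c \<in> D \<longleftrightarrow> x \<in> D" and u: "u \<in> sobolev0 D \<rho>"
  shows "(\<lambda>x. u (x - c)) \<in> sobolev0 D \<rho>" "sob_norm D \<rho> (\<lambda>x. u (x - c)) = sob_norm D \<rho> u"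
proof -
  have inv': "\<And>x. x + (- c) \<in> D \<longleftrightarrow> x \<in> D"
    using inv by (metis add.commute diff_add_cancel uminus_add_conv_diff)
  have us: "u \<in> sobolev D \<rho>" using u by (simp add: sobolev0_def)
  obtain \<phi> :: "nat \<Rightarrow> real^'n \<Rightarrow> real" where \<phi>: "\<And>j. test_fun D (\<phi> j)" "\<And>j. \<phi> j \<in> sobolev D \<rho>"
    and lim: "(\<lambda>j. sob_norm D \<rho> (\<lambda>x. \<phi> j x - u x)) \<longlonglongrightarrow> 0"
    using u by (auto simp: sobolev0_def)
  define \<psi> where "\<psi> j = (\<lambda>x. \<phi> j (x - c))" for j
  have t: "test_fun D (\<psi> j)" for j
    using test_translate[OF inv' \<phi>(1)[of j]] by (simp add: \<psi>_def)
  have s: "\<psi> j \<in> sobolev D \<rho>" for j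
    unfolding \<psi>_def by (rule sobolev_translate(1)[OF inv \<phi>(2)])
  have e: "sob_norm D \<rho> (\<lambda>x. \<psi> j x - u (x - c)) = sob_norm D \<rho> (\<lambda>x. \<phi> j x - u x)" for j
    using sobolev_translate(2)[OF inv sobolev_diff[OF \<phi>(2)[of j] us]] by (simp add: \<psi>_def)
  show "(\<lambda>x. u (x - c)) \<in> sobolev0 D \<rho>"
    unfolding sobolev0_def
    using sobolev_translate(1)[OF inv us] t s lim e by (intro CollectI conjI exI[of _ \<psi>]) auto
  show "sob_norm D \<rho> (\<lambda>x. u (x - c)) = sob_norm D \<rho> u"
    by (rule sobolev_translate(2)[OF inv us])
qed

lemma test_zero_fun: "test_fun D (\<lambda>x. 0)"
proof -
  have pd0: "pd is (\<lambda>x::real^'n. 0) = (\<lambda>x. 0)" for "is"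
    by (induction "is") (auto simp: partial_d_def)
  show ?thesis unfolding test_fun_def pd0 by auto
qed

lemma weak_partial_zero: "weak_partial D (\<lambda>x. 0) i (\<lambda>x. 0)"
  by (simp add: weak_partial_def locally_integrable_def set_integrable_def)

lemma zero_sobolev: "(\<lambda>x. 0) \<in> sobolev D \<rho>" "sob_norm D \<rho> (\<lambda>x. 0) = 0"
proof -
  have z: "\<forall>i. weak_partial D (\<lambda>x. 0) i (\<lambda>x. 0)" using weak_partial_zero by blast
  show "(\<lambda>x. 0) \<in> sobolev D \<rho>"
    unfolding sobolev_def using ri_space_zero[OF bfn Dm] z by auto
  show "sob_norm D \<rho> (\<lambda>x. 0) = 0"
    using sob_norm_eq[OF D bfn z] rho_zero[OF bfn Dm] by (simp add: ri_norm_def)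
qed

lemma zero_sobolev0: "(\<lambda>x. 0) \<in> sobolev0 D \<rho>"
  unfolding sobolev0_def
  using zero_sobolev test_zero_fun by (intro CollectI conjI exI[of _ "\<lambda>_ x. 0"]) auto

end



lemma rho_sub_le:
  assumes bfn: "ri_bfn D \<rho>" and Dm: "D \<in> sets lebesgue"
    and f: "nonneg_meas D f" and g: "nonneg_meas D g" and h: "nonneg_meas D h"
    and le: "\<And>x. x \<in> D \<Longrightarrow> f x \<le> g x + h x"
    and gf: "\<rho> g < \<infinity>" and hf: "\<rho> h < \<infinity>"
  shows "enn2real (\<rho> f) \<le> enn2real (\<rho> g) + enn2real (\<rho> h)"
proof -
  have gh: "nonneg_meas D (\<lambda>x. g x + h x)"
    using g h by (auto simp: nonneg_meas_def intro!: borel_measurable_add)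
  have "\<rho> f \<le> \<rho> (\<lambda>x. g x + h x)" by (rule rho_mono[OF bfn Dm gh f le])
  also have "\<dots> \<le> \<rho> g + \<rho> h" by (rule rho_add[OF bfn Dm g h])
  finally have "\<rho> f \<le> \<rho> g + \<rho> h" .
  moreover have "\<rho> g + \<rho> h < top" using gf hf by (simp add: top_unique)
  ultimately have "enn2real (\<rho> f) \<le> enn2real (\<rho> g + \<rho> h)" by (rule enn2real_mono)
  also have "\<dots> = enn2real (\<rho> g) + enn2real (\<rho> h)"
    using gf hf by (intro enn2real_plus) auto
  finally show ?thesis .
qed

lemma ind_meas: "A \<in> sets lebesgue \<Longrightarrow> (indicator A :: _ \<Rightarrow> real) \<in> borel_measurable (lebesgue_on D)"
  by (intro measurable_restrict_space1 borel_measurable_indicator)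

lemma lower_core:
  fixes D :: "(real^'n::finite) set" and u :: "real^'n \<Rightarrow> real" and N :: nat
  assumes D: "open D" and bX: "ri_bfn D \<rho>X" and bY: "ri_bfn D \<rho>Y"
    and sub: "sobolev0 D \<rho>X \<subseteq> ri_space D \<rho>Y"
    and ac: "abs_cont_norm D \<rho>Y"
    and inv: "\<And>s x. x + s *\<^sub>R axis i0 1 \<in> D \<longleftrightarrow> x \<in> D"
    and u: "u \<in> sobolev0 D \<rho>X" "sob_norm D \<rho>X u \<le> 1"
    and y: "\<And>j. j < N \<Longrightarrow> y j \<in> ri_space D \<rho>Y"
    and cover: "\<And>w. w \<in> sobolev0 D \<rho>X \<Longrightarrow> sob_norm D \<rho>X w \<le> 1 \<Longrightarrow> \<exists>j<N. ri_norm \<rho>Y (\<lambda>x. w x - y j x) \<le> \<epsilon>"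
    and \<delta>: "\<delta> > 0"
  shows "ri_norm \<rho>Y u \<le> \<epsilon> + 2 * \<delta>"
proof -
  have Dm: "D \<in> sets lebesgue" using D by (rule open_lebesgue)
  define Out where "Out r = {x \<in> D. r < \<bar>x$i0\<bar>}" for r :: real
  define In where "In r = {x \<in> D. \<bar>x$i0\<bar> \<le> r}" for r :: real
  have Outm: "Out r \<in> sets lebesgue" for r
  proof -
    have "open {x::real^'n. r < \<bar>x$i0\<bar>}"
      by (intro open_Collect_less continuous_intros)
    then have "open (Out r)" unfolding Out_def using D by (simp add: Collect_conj_eq open_Int Int_commute Collect_mem_eq)
    then show ?thesis by (rule open_lebesgue)
  qed
  have Inm: "In r \<in> sets lebesgue" for r
  proof -
    have "closed {x::real^'n. \<bar>x$i0\<bar> \<le> r}"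
      by (intro closed_Collect_le continuous_intros)
    then have "{x::real^'n. \<bar>x$i0\<bar> \<le> r} \<in> sets lebesgue" by (intro borel_imp_lebesgue borel_closed)
    moreover have "In r = D \<inter> {x::real^'n. \<bar>x$i0\<bar> \<le> r}" by (auto simp: In_def)
    ultimately show ?thesis using Dm by auto
  qed
  have ind0: "(\<lambda>k. indicator (Out (real k)) x :: real) \<longlonglongrightarrow> 0" for x
  proof -
    have "eventually (\<lambda>k. indicator (Out (real k)) x = (0::real)) sequentially"
      unfolding eventually_sequentially
    proof (intro exI allI impI)
      fix k assume "nat \<lceil>\<bar>x$i0\<bar>\<rceil> \<le> k"
      then have "\<bar>x$i0\<bar> \<le> real k" by linarith
      then show "indicator (Out (real k)) x = (0::real)" by (simp add: Out_def indicator_def)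
    qed
    then show ?thesis by (simp add: tendsto_eventually)
  qed
  have acl: "(\<lambda>k. ri_norm \<rho>Y (\<lambda>x. f x * indicator (Out (real k)) x)) \<longlonglongrightarrow> 0" if "f \<in> ri_space D \<rho>Y" for f
  proof -
    have OD: "Out r \<subseteq> D" for r by (auto simp: Out_def)
    have "(\<forall>k. Out (real k) \<in> sets lebesgue \<and> Out (real k) \<subseteq> D) \<and>
          (AE x in lebesgue_on D. (\<lambda>k. indicator (Out (real k)) x :: real) \<longlonglongrightarrow> 0)"
      using Outm OD ind0 by (auto intro!: AE_I2)
    from ac[unfolded abs_cont_norm_def, rule_format, OF that this] show ?thesis .
  qed
  have us: "u \<in> ri_space D \<rho>Y" using u sub by blast
  obtain R :: nat where R: "ri_norm \<rho>Y (\<lambda>x. u x * indicator (Out (real R)) x) < \<delta>"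
    using order_tendstoD(2)[OF acl[OF us] \<delta>] by (auto simp: eventually_sequentially)
  have "eventually (\<lambda>k. \<forall>j\<in>{..<N}. ri_norm \<rho>Y (\<lambda>x. y j x * indicator (Out (real k)) x) < \<delta>) sequentially"
    using order_tendstoD(2)[OF acl[OF y] \<delta>] by (intro eventually_ball_finite) auto
  then obtain S :: nat where S: "\<And>j. j < N \<Longrightarrow> ri_norm \<rho>Y (\<lambda>x. y j x * indicator (Out (real S)) x) < \<delta>"
    by (auto simp: eventually_sequentially)
  define s where "s = real R + real S + 1"
  define c where "c = s *\<^sub>R axis i0 (1::real)"
  have invc: "\<And>x. x + c \<in> D \<longleftrightarrow> x \<in> D" unfolding c_def by (rule inv)
  define w where "w = (\<lambda>x. u (x - c))"
  have w: "w \<in> sobolev0 D \<rho>X" "sob_norm D \<rho>X w \<le> 1"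
    using sobolev0_translate[OF D bX invc u(1)] u(2) by (auto simp: w_def)
  obtain j where j: "j < N" "ri_norm \<rho>Y (\<lambda>x. w x - y j x) \<le> \<epsilon>"
    using cover[OF w] by blast
  have ws: "w \<in> ri_space D \<rho>Y" using w sub by blast
  have ys: "y j \<in> ri_space D \<rho>Y" using y j by blast
  have um: "u \<in> borel_measurable (lebesgue_on D)" using us by (simp add: ri_space_def)
  have wm: "w \<in> borel_measurable (lebesgue_on D)" using ws by (simp add: ri_space_def)
  have ym: "y j \<in> borel_measurable (lebesgue_on D)" using ys by (simp add: ri_space_def)
  have uf: "\<rho>Y (\<lambda>x. \<bar>u x\<bar>) < \<infinity>" using us by (simp add: ri_space_def)
  have yf: "\<rho>Y (\<lambda>x. \<bar>y j x\<bar>) < \<infinity>" using ys by (simp add: ri_space_def)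
  have wyf: "\<rho>Y (\<lambda>x. \<bar>w x - y j x\<bar>) < \<infinity>"
    using ri_space_diff[OF bY Dm ws ys] by (simp add: ri_space_def)
  define fin where "fin x = \<bar>u x * indicator (In (real R)) x\<bar>" for x
  define fout where "fout x = \<bar>u x * indicator (Out (real R)) x\<bar>" for x
  have nm_fin: "nonneg_meas D fin" unfolding fin_def nonneg_meas_def
    by (auto intro!: borel_measurable_abs borel_measurable_times um ind_meas Inm)
  have nm_fout: "nonneg_meas D fout" unfolding fout_def nonneg_meas_def
    by (auto intro!: borel_measurable_abs borel_measurable_times um ind_meas Outm)
  have finf: "\<rho>Y fin < \<infinity>"
  proof -
    have "\<rho>Y fin \<le> \<rho>Y (\<lambda>x. \<bar>u x\<bar>)"
      by (rule rho_mono[OF bY Dm nonneg_meas_abs[OF um] nm_fin]) (auto simp: fin_def indicator_def)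
    then show ?thesis using uf by (simp add: le_less_trans)
  qed
  have foutf: "\<rho>Y fout < \<infinity>"
  proof -
    have "\<rho>Y fout \<le> \<rho>Y (\<lambda>x. \<bar>u x\<bar>)"
      by (rule rho_mono[OF bY Dm nonneg_meas_abs[OF um] nm_fout]) (auto simp: fout_def indicator_def)
    then show ?thesis using uf by (simp add: le_less_trans)
  qed
  have A: "ri_norm \<rho>Y u \<le> enn2real (\<rho>Y fin) + enn2real (\<rho>Y fout)"
    unfolding ri_norm_def
    by (rule rho_sub_le[OF bY Dm nonneg_meas_abs[OF um] nm_fin nm_fout _ finf foutf])
       (auto simp: fin_def fout_def In_def Out_def indicator_def)
  have fout_small: "enn2real (\<rho>Y fout) < \<delta>" using R by (simp add: ri_norm_def fout_def[abs_def])
  have B: "\<rho>Y (\<lambda>x. fin (x - c)) = \<rho>Y fin" by (rule rho_translate[OF bY Dm invc nm_fin])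
  have nm_fin': "nonneg_meas D (\<lambda>x. fin (x - c))"
    using nm_fin measurable_on_translate[OF invc Dm] invc[of "x - c" for x]
    by (auto simp: nonneg_meas_def)
  define g1 where "g1 x = \<bar>w x - y j x\<bar>" for x
  define g2 where "g2 x = \<bar>y j x * indicator (Out (real S)) x\<bar>" for x
  have nm_g1: "nonneg_meas D g1" unfolding g1_def nonneg_meas_def
    by (auto intro!: borel_measurable_abs borel_measurable_diff wm ym)
  have nm_g2: "nonneg_meas D g2" unfolding g2_def nonneg_meas_def
    by (auto intro!: borel_measurable_abs borel_measurable_times ym ind_meas Outm)
  have g2f: "\<rho>Y g2 < \<infinity>"
  proof -
    have "\<rho>Y g2 \<le> \<rho>Y (\<lambda>x. \<bar>y j x\<bar>)"
      by (rule rho_mono[OF bY Dm nonneg_meas_abs[OF ym] nm_g2]) (auto simp: g2_def indicator_def)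
    then show ?thesis using yf by (simp add: le_less_trans)
  qed
  have ci0: "c $ i0 = s" by (simp add: c_def)
  have C: "enn2real (\<rho>Y (\<lambda>x. fin (x - c))) \<le> enn2real (\<rho>Y g1) + enn2real (\<rho>Y g2)"
  proof (rule rho_sub_le[OF bY Dm nm_fin' nm_g1 nm_g2 _ _ g2f])
    show "\<rho>Y g1 < \<infinity>" using wyf by (simp add: g1_def[abs_def])
    fix x assume xD: "x \<in> D"
    show "fin (x - c) \<le> g1 x + g2 x"
    proof (cases "x - c \<in> In (real R)")
      case True
      then have "\<bar>x $ i0 - s\<bar> \<le> real R" by (simp add: In_def ci0)
      then have "real S < \<bar>x $ i0\<bar>" unfolding s_def by linarith
      then have xo: "x \<in> Out (real S)" using xD by (simp add: Out_def)
      have "fin (x - c) = \<bar>w x\<bar>" using True by (simp add: fin_def w_def)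
      also have "\<dots> \<le> \<bar>w x - y j x\<bar> + \<bar>y j x\<bar>" by linarith
      also have "\<dots> = g1 x + g2 x" using xo by (simp add: g1_def g2_def)
      finally show ?thesis .
    next
      case False
      then show ?thesis by (simp add: fin_def g1_def g2_def)
    qed
  qed
  have g1_le: "enn2real (\<rho>Y g1) \<le> \<epsilon>" using j(2) by (simp add: ri_norm_def g1_def[abs_def])
  have g2_small: "enn2real (\<rho>Y g2) < \<delta>" using S[OF j(1)] by (simp add: ri_norm_def g2_def[abs_def])
  show ?thesis using A fout_small B C g1_le g2_small by simp
qed



theorem mainTheorem2:
  fixes K :: "'n::finite set" and a b :: "'n \<Rightarrow> real"
    and \<rho>X \<rho>Y :: "(real^'n \<Rightarrow> real) \<Rightarrow> ennreal"
  assumes "K \<noteq> {}" and "K \<noteq> UNIV"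
    and "\<forall>i. i \<notin> K \<longrightarrow> a i < b i"
    and "ri_bfn (slab_domain K a b) \<rho>X"
    and "ri_bfn (slab_domain K a b) \<rho>Y"
    and "sobolev_embedded (slab_domain K a b) \<rho>X \<rho>Y"
    and "abs_cont_norm (slab_domain K a b) \<rho>Y"
  shows "(\<forall>m::nat. m \<ge> 1 \<longrightarrow>
            entropy_number (slab_domain K a b) \<rho>X \<rho>Y m = emb_norm (slab_domain K a b) \<rho>X \<rho>Y)
       \<and> (\<lambda>m. entropy_number (slab_domain K a b) \<rho>X \<rho>Y m)
            \<longlonglongrightarrow> emb_norm (slab_domain K a b) \<rho>X \<rho>Y"
proof -
  define D where "D = slab_domain K a b"
  obtain i0 where i0: "i0 \<in> K" using assms(1) by blast
  have Deq: "D = (\<Inter>i\<in>-K. {x. a i < x$i} \<inter> {x. x$i < b i})"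
    by (auto simp: D_def slab_domain_def)
  have Dopen: "open D"
    unfolding Deq by (intro open_INT ballI open_Int open_Collect_less continuous_intros) auto
  have Dm: "D \<in> sets lebesgue" using Dopen by (rule open_lebesgue)
  have comp: "axis i0 1 $ i = (0::real)" if "i \<notin> K" for i
    using that i0 by (auto simp: axis_def)
  have inv: "\<And>s x. x + s *\<^sub>R axis i0 1 \<in> D \<longleftrightarrow> x \<in> D"
    by (simp add: D_def slab_domain_def comp)
  have bX: "ri_bfn D \<rho>X" and bY: "ri_bfn D \<rho>Y" and emb: "sobolev_embedded D \<rho>X \<rho>Y"
    and ac: "abs_cont_norm D \<rho>Y"
    using assms by (simp_all add: D_def)
  have sub: "sobolev0 D \<rho>X \<subseteq> ri_space D \<rho>Y" using emb by (simp add: sobolev_embedded_def)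
  obtain C where C: "\<And>u. u \<in> sobolev0 D \<rho>X \<Longrightarrow> ri_norm \<rho>Y u \<le> C * sob_norm D \<rho>X u"
    using emb by (auto simp: sobolev_embedded_def)
  define B where "B = {ri_norm \<rho>Y u | u. u \<in> sobolev0 D \<rho>X \<and> sob_norm D \<rho>X u \<le> 1}"
  have embB: "emb_norm D \<rho>X \<rho>Y = Sup B" by (simp add: emb_norm_def B_def)
  have sob_nonneg: "0 \<le> sob_norm D \<rho>X u" for u
    by (simp add: sob_norm_def ri_norm_def)
  have bdd: "bdd_above B"
    unfolding bdd_above_def
  proof (intro exI ballI)
    fix b assume "b \<in> B"
    then obtain u where u: "u \<in> sobolev0 D \<rho>X" "sob_norm D \<rho>X u \<le> 1" "b = ri_norm \<rho>Y u"
      by (auto simp: B_def)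
    have "b \<le> C * sob_norm D \<rho>X u" using C[OF u(1)] u(3) by simp
    also have "\<dots> \<le> \<bar>C\<bar> * sob_norm D \<rho>X u" by (intro mult_right_mono sob_nonneg) auto
    also have "\<dots> \<le> \<bar>C\<bar>" by (intro mult_left_le u(2)) auto
    finally show "b \<le> \<bar>C\<bar>" .
  qed
  have zB: "0 \<in> B"
  proof -
    have "ri_norm \<rho>Y (\<lambda>x::real^'n. 0) = 0"
      using rho_zero[OF bY Dm] by (simp add: ri_norm_def)
    then show ?thesis
      using zero_sobolev0[OF Dopen bX] zero_sobolev(2)[OF Dopen bX] unfolding B_def
      by (intro CollectI exI[of _ "\<lambda>x. 0"]) auto
  qed
  have Bne: "B \<noteq> {}" using zB by blast
  define E where "E = Sup B"
  have E0: "0 \<le> E" unfolding E_def by (rule cSup_upper[OF zB bdd])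
  have Bup: "ri_norm \<rho>Y u \<le> E" if "u \<in> sobolev0 D \<rho>X" "sob_norm D \<rho>X u \<le> 1" for u
    unfolding E_def by (rule cSup_upper[OF _ bdd]) (use that in \<open>auto simp: B_def\<close>)
  have key: "entropy_number D \<rho>X \<rho>Y m = E" if m: "m \<ge> 1" for m
  proof -
    define N :: nat where "N = 2^(m-1)"
    define S where "S = {\<epsilon>. \<epsilon> > 0 \<and>
     (\<exists>y :: nat \<Rightarrow> real^'n \<Rightarrow> real. (\<forall>j < N. y j \<in> ri_space D \<rho>Y) \<and>
        (\<forall>u \<in> sobolev0 D \<rho>X. sob_norm D \<rho>X u \<le> 1 \<longrightarrow>
           (\<exists>j < N. ri_norm \<rho>Y (\<lambda>x. u x - y j x) \<le> \<epsilon>)))}"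
    have entS: "entropy_number D \<rho>X \<rho>Y m = Inf S"
      by (simp add: entropy_number_def S_def N_def)
    have N0: "0 < N" by (simp add: N_def)
    have upper: "\<epsilon> \<in> S" if "\<epsilon> > E" for \<epsilon>
      unfolding S_def
    proof (intro CollectI conjI exI[of _ "\<lambda>_ _. 0"] allI impI ballI)
      show "\<epsilon> > 0" using that E0 by simp
      fix j show "(\<lambda>_. 0) \<in> ri_space D \<rho>Y" by (rule ri_space_zero[OF bY Dm])
    next
      fix u assume "u \<in> sobolev0 D \<rho>X" "sob_norm D \<rho>X u \<le> 1"
      then have "ri_norm \<rho>Y (\<lambda>x. u x - 0) \<le> \<epsilon>" using Bup that by fastforce
      then show "\<exists>j<N. ri_norm \<rho>Y (\<lambda>x. u x - 0) \<le> \<epsilon>" using N0 by blast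
    qed
    have lower: "E \<le> \<epsilon>" if eS: "\<epsilon> \<in> S" for \<epsilon>
    proof -
      obtain y :: "nat \<Rightarrow> real^'n \<Rightarrow> real" where y: "\<And>j. j < N \<Longrightarrow> y j \<in> ri_space D \<rho>Y"
        and cov: "\<And>w. w \<in> sobolev0 D \<rho>X \<Longrightarrow> sob_norm D \<rho>X w \<le> 1 \<Longrightarrow> \<exists>j<N. ri_norm \<rho>Y (\<lambda>x. w x - y j x) \<le> \<epsilon>"
        using eS unfolding S_def by blast
      show ?thesis
        unfolding E_def
      proof (rule cSup_least[OF Bne])
        fix b assume "b \<in> B"
        then obtain u where u: "u \<in> sobolev0 D \<rho>X" "sob_norm D \<rho>X u \<le> 1" "b = ri_norm \<rho>Y u"
          by (auto simp: B_def)
        show "b \<le> \<epsilon>"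
        proof (rule field_le_epsilon)
          fix \<delta> :: real assume "0 < \<delta>"
          then have "ri_norm \<rho>Y u \<le> \<epsilon> + 2 * (\<delta> / 2)"
            by (intro lower_core[OF Dopen bX bY sub ac inv u(1,2) y cov]) auto
          then show "b \<le> \<epsilon> + \<delta>" using u(3) by simp
        qed
      qed
    qed
    have Sne: "S \<noteq> {}" using upper[of "E + 1"] by auto
    have bddS: "bdd_below S" unfolding bdd_below_def using lower by blast
    have "E \<le> Inf S" by (rule cInf_greatest[OF Sne lower])
    moreover have "Inf S \<le> E"
    proof (rule field_le_epsilon)
      fix \<delta> :: real assume "0 < \<delta>"
      then show "Inf S \<le> E + \<delta>" by (intro cInf_lower[OF upper bddS]) simp
    qed
    ultimately show ?thesis using entS by simp
  qed
  show ?thesis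
    unfolding D_def[symmetric] embB E_def[symmetric]
  proof (intro conjI allI impI)
    fix m :: nat assume "m \<ge> 1" then show "entropy_number D \<rho>X \<rho>Y m = E" by (rule key)
  next
    have "eventually (\<lambda>m. E = entropy_number D \<rho>X \<rho>Y m) sequentially"
      using key by (auto simp: eventually_sequentially intro!: exI[of _ 1])
    then show "(\<lambda>m. entropy_number D \<rho>X \<rho>Y m) \<longlonglongrightarrow> E"
      by (rule Lim_transform_eventually[OF tendsto_const])
  qed
qed


end
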